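(* For every density operator $\rho$ on $\mathbb{C}^d$, $$\overline{C}_{\mathcal{R}}(\rho)=\max_{\Lambda\in\mathrm{GIO}}F\big(\Lambda(\rho),|\phi^+\rangle\langle\phi^+|\big),$$ where $F(\rho,\sigma)=\left(\mathrm{tr}\sqrt{\rho^{1/2}\sigma\rho^{1/2}}\right)^2$ is the fidelity (so that the right-hand side equals $\max_{\Lambda\in\mathrm{GIO}}\langle\phi^+|\Lambda(\rho)|\phi^+\rangle$).
   Context: Fix the computational basis $\{|i\rangle\}_{i=0}^{d-1}$ of $\mathbb{C}^d$ as the incoherent basis; $\mathcal{I}$ denotes the set of density operators diagonal in this basis. Let $|\phi^+\rangle=\frac{1}{\sqrt d}\sum_{i=0}^{d-1}|i\rangle$. The robustness of coherence is $C_{\mathcal{R}}(\rho)=\min\{s\ge0: \exists\text{ density operator }\tau,\ (\rho+s\tau)/(1+s)\in\mathcal{I}\}$ and $\overline{C}_{\mathcal{R}}(\rho)=(1+C_{\mathcal{R}}(\rho))/d$. A genuinely incoherent operation (GIO) is a quantum channel (completely positive trace-preserving map) $\Lambda$ on $d\times d$ matrices with $\Lambda(|i\rangle\langle i|)=|i\rangle\langle i|$ for all $i$; equivalently, $\Lambda(\rho)=\tau\circ\rho$ (entrywise/Schur product) for some positive semidefinite matrix $\tau$ with all diagonal entries equal to $1$ (a correlation matrix). *)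

theory Defs
  imports Complex_Main "Jordan_Normal_Form.Schur_Decomposition"
begin

text \<open>Matrices on C^d are complex d x d matrices of Jordan_Normal_Form (carrier_mat d d).
  The incoherent basis is the standard basis.\<close>

definition adj :: "complex mat \<Rightarrow> complex mat" where
  "adj A = mat_adjoint A"

definition mtrace :: "complex mat \<Rightarrow> complex" where
  "mtrace A = (\<Sum>i<dim_row A. A $$ (i,i))"

definition hermitian_mat :: "nat \<Rightarrow> complex mat \<Rightarrow> bool" where
  "hermitian_mat d A \<longleftrightarrow> A \<in> carrier_mat d d \<and> adj A = A"

definition psd :: "nat \<Rightarrow> complex mat \<Rightarrow> bool" where
  "psd d A \<longleftrightarrow> hermitian_mat d A \<and>
     (\<forall>v \<in> carrier_vec d. 0 \<le> Re (\<Sum>i<d. \<Sum>j<d. cnj (v $ i) * A $$ (i,j) * v $ j))"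

definition density :: "nat \<Rightarrow> complex mat \<Rightarrow> bool" where
  "density d \<rho> \<longleftrightarrow> psd d \<rho> \<and> mtrace \<rho> = 1"

definition incoherent :: "nat \<Rightarrow> complex mat \<Rightarrow> bool" where
  "incoherent d \<rho> \<longleftrightarrow> density d \<rho> \<and> (\<forall>i<d. \<forall>j<d. i \<noteq> j \<longrightarrow> \<rho> $$ (i,j) = 0)"

text \<open>Robustness of coherence (the minimum, written as infimum over the feasible set).\<close>
definition robustness :: "nat \<Rightarrow> complex mat \<Rightarrow> real" where
  "robustness d \<rho> = Inf {s::real. 0 \<le> s \<and>
     (\<exists>\<tau>. density d \<tau> \<and> incoherent d ((1 / (1 + complex_of_real s)) \<cdot>\<^sub>m (\<rho> + complex_of_real s \<cdot>\<^sub>m \<tau>)))}"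

definition robustness_bar :: "nat \<Rightarrow> complex mat \<Rightarrow> real" where
  "robustness_bar d \<rho> = (1 + robustness d \<rho>) / real d"

definition ket :: "nat \<Rightarrow> nat \<Rightarrow> complex vec" where
  "ket d i = unit_vec d i"

definition proj :: "nat \<Rightarrow> complex vec \<Rightarrow> complex mat" where
  "proj d v = mat d d (\<lambda>(i,j). v $ i * cnj (v $ j))"

definition phi_plus :: "nat \<Rightarrow> complex vec" where
  "phi_plus d = vec d (\<lambda>i. complex_of_real (1 / sqrt (real d)))"

definition psd_sqrt :: "nat \<Rightarrow> complex mat \<Rightarrow> complex mat" where
  "psd_sqrt d A = (THE B. psd d B \<and> B * B = A)"

definition fidelity :: "nat \<Rightarrow> complex mat \<Rightarrow> complex mat \<Rightarrow> real" where
  "fidelity d \<rho> \<sigma> =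
     (Re (mtrace (psd_sqrt d (psd_sqrt d \<rho> * \<sigma> * psd_sqrt d \<rho>))))^2"

definition quantum_channel :: "nat \<Rightarrow> (complex mat \<Rightarrow> complex mat) \<Rightarrow> bool" where
  "quantum_channel d \<Lambda> \<longleftrightarrow>
     (\<exists>(n::nat) (K :: nat \<Rightarrow> complex mat).
        (\<forall>k<n. K k \<in> carrier_mat d d) \<and>
        mat d d (\<lambda>(i,j). \<Sum>k<n. (adj (K k) * K k) $$ (i,j)) = 1\<^sub>m d \<and>
        (\<forall>\<rho> \<in> carrier_mat d d.
           \<Lambda> \<rho> = mat d d (\<lambda>(i,j). \<Sum>k<n. (K k * \<rho> * adj (K k)) $$ (i,j))))"

definition GIO :: "nat \<Rightarrow> (complex mat \<Rightarrow> complex mat) \<Rightarrow> bool" where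
  "GIO d \<Lambda> \<longleftrightarrow> quantum_channel d \<Lambda> \<and>
     (\<forall>i<d. \<Lambda> (proj d (ket d i)) = proj d (ket d i))"

end

theory Submission
  imports Defs
begin

lemma adj_carrier: "A \<in> carrier_mat n m \<Longrightarrow> adj A \<in> carrier_mat m n"
  unfolding adj_def mat_adjoint_def by (auto simp: mat_of_rows_def)

lemma adj_index: "A \<in> carrier_mat n m \<Longrightarrow> i < m \<Longrightarrow> j < n \<Longrightarrow> adj A $$ (i,j) = cnj (A $$ (j,i))"
  unfolding adj_def mat_adjoint_def by (auto simp: mat_of_rows_def)

lemma mult_index: "A \<in> carrier_mat n k \<Longrightarrow> B \<in> carrier_mat k m \<Longrightarrow> i < n \<Longrightarrow> j < m \<Longrightarrow>
   (A * B) $$ (i,j) = (\<Sum>l<k. A $$ (i,l) * B $$ (l,j))"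
  by (auto simp: scalar_prod_def atLeast0LessThan intro!: sum.cong)

lemma herm_iff: "hermitian_mat d A \<longleftrightarrow> A \<in> carrier_mat d d \<and> (\<forall>i<d. \<forall>j<d. A $$ (i,j) = cnj (A $$ (j,i)))"
proof
  assume h: "hermitian_mat d A"
  then have A: "A \<in> carrier_mat d d" and e: "adj A = A" unfolding hermitian_mat_def by auto
  show "A \<in> carrier_mat d d \<and> (\<forall>i<d. \<forall>j<d. A $$ (i,j) = cnj (A $$ (j,i)))"
  proof (intro conjI allI impI A)
    fix i j assume ij: "i < d" "j < d"
    have "adj A $$ (i,j) = cnj (A $$ (j,i))" by (rule adj_index[OF A ij])
    then show "A $$ (i,j) = cnj (A $$ (j,i))" unfolding e .
  qed
next
  assume h: "A \<in> carrier_mat d d \<and> (\<forall>i<d. \<forall>j<d. A $$ (i,j) = cnj (A $$ (j,i)))"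
  then have A: "A \<in> carrier_mat d d" and e: "\<And>i j. i < d \<Longrightarrow> j < d \<Longrightarrow> A $$ (i,j) = cnj (A $$ (j,i))" by blast+
  have ac: "adj A \<in> carrier_mat d d" by (rule adj_carrier[OF A])
  have "adj A = A"
  proof (rule eq_matI)
    fix i j assume "i < dim_row A" "j < dim_col A"
    then have ij: "i < d" "j < d" using A by auto
    show "adj A $$ (i,j) = A $$ (i,j)" unfolding adj_index[OF A ij] using e[OF ij] by simp
  qed (use A ac in auto)
  then show "hermitian_mat d A" unfolding hermitian_mat_def using A by auto
qed

definition bf :: "nat \<Rightarrow> complex mat \<Rightarrow> (nat \<Rightarrow> complex) \<Rightarrow> (nat \<Rightarrow> complex) \<Rightarrow> complex" where
  "bf d A x y = (\<Sum>i<d. \<Sum>j<d. cnj (x i) * A $$ (i,j) * y j)"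

lemma bf_cong: "(\<And>i. i < d \<Longrightarrow> x i = x' i) \<Longrightarrow> (\<And>i. i < d \<Longrightarrow> y i = y' i) \<Longrightarrow> bf d A x y = bf d A x' y'"
  unfolding bf_def by (auto intro!: sum.cong)

lemma psd_iff: "psd d A \<longleftrightarrow> hermitian_mat d A \<and> (\<forall>x. 0 \<le> Re (bf d A x x))"
proof
  assume "psd d A"
  then have h: "hermitian_mat d A" and q: "\<And>v. v \<in> carrier_vec d \<Longrightarrow> 0 \<le> Re (\<Sum>i<d. \<Sum>j<d. cnj (v $ i) * A $$ (i,j) * v $ j)"
    unfolding psd_def by auto
  show "hermitian_mat d A \<and> (\<forall>x. 0 \<le> Re (bf d A x x))"
  proof (intro conjI allI h)
    fix x
    have "bf d A x x = bf d A (\<lambda>i. vec d x $ i) (\<lambda>i. vec d x $ i)" by (rule bf_cong, auto)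
    then show "0 \<le> Re (bf d A x x)" using q[of "vec d x"] unfolding bf_def by auto
  qed
next
  assume "hermitian_mat d A \<and> (\<forall>x. 0 \<le> Re (bf d A x x))"
  then show "psd d A" unfolding psd_def bf_def by auto
qed

lemma bf_add_left: "bf d A (\<lambda>i. x i + y i) z = bf d A x z + bf d A y z"
  unfolding bf_def by (simp add: ring_distribs sum.distrib)
lemma bf_add_right: "bf d A z (\<lambda>i. x i + y i) = bf d A z x + bf d A z y"
  unfolding bf_def by (simp add: ring_distribs sum.distrib)
lemma bf_scale_left: "bf d A (\<lambda>i. c * x i) z = cnj c * bf d A x z"
  unfolding bf_def by (simp add: sum_distrib_left mult.assoc)
lemma bf_scale_right: "bf d A z (\<lambda>i. c * x i) = c * bf d A z x"
  unfolding bf_def by (simp add: sum_distrib_left mult.assoc mult.left_commute)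

lemma bf_herm_swap: assumes "hermitian_mat d A" shows "bf d A y x = cnj (bf d A x y)"
proof -
  have e: "\<And>i j. i < d \<Longrightarrow> j < d \<Longrightarrow> A $$ (i,j) = cnj (A $$ (j,i))" using assms unfolding herm_iff by blast
  have "bf d A y x = (\<Sum>i<d. \<Sum>j<d. cnj (y i) * A $$ (i,j) * x j)" unfolding bf_def ..
  also have "\<dots> = (\<Sum>j<d. \<Sum>i<d. cnj (y i) * A $$ (i,j) * x j)" by (rule sum.swap)
  also have "\<dots> = (\<Sum>j<d. \<Sum>i<d. cnj (cnj (x j) * A $$ (j,i) * y i))"
    apply (intro sum.cong refl) apply (subst e) by auto
  also have "\<dots> = cnj (bf d A x y)" unfolding bf_def by simp
  finally show ?thesis .
qed

lemma bf_herm_real: assumes "hermitian_mat d A" shows "Im (bf d A x x) = 0"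
  using bf_herm_swap[OF assms, of x x] by (metis cnj.simps(2) diff_eq_eq diff_self neg_equal_zero)


lemma quad_nonneg_imp: fixes a b :: real
  assumes "\<And>t. t > 0 \<Longrightarrow> 0 \<le> 2*t*a + t^2*b" shows "0 \<le> a"
proof (rule ccontr)
  assume "\<not> 0 \<le> a" then have a: "a < 0" by simp
  define t where "t = -a / (\<bar>b\<bar> + 1)"
  have b1: "\<bar>b\<bar> + 1 > 0" by simp
  then have t: "t > 0" using a unfolding t_def by (simp add: divide_neg_pos)
  have e: "t * (\<bar>b\<bar> + 1) = -a" unfolding t_def using b1 by simp
  then have tb: "t * \<bar>b\<bar> < -a" using t by (simp add: algebra_simps)
  have "t^2 * b \<le> t * (t * \<bar>b\<bar>)" using t by (simp add: power2_eq_square mult_left_mono)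
  also have "\<dots> < t * (-a)" by (rule mult_strict_left_mono[OF tb t])
  finally have "2*t*a + t^2*b < t * a" by linarith
  also have "t * a < 0" using t a by (simp add: mult_pos_neg)
  finally show False using assms[OF t] by simp
qed

definition nrm2 :: "nat \<Rightarrow> (nat \<Rightarrow> complex) \<Rightarrow> real" where
  "nrm2 d x = (\<Sum>i<d. (cmod (x i))^2)"

definition mv :: "nat \<Rightarrow> complex mat \<Rightarrow> (nat \<Rightarrow> complex) \<Rightarrow> nat \<Rightarrow> complex" where
  "mv d A x = (\<lambda>i. \<Sum>j<d. A $$ (i,j) * x j)"

lemma bf_mv: "bf d A y x = (\<Sum>i<d. cnj (y i) * mv d A x i)"
  unfolding bf_def mv_def by (simp add: sum_distrib_left mult.assoc)

lemma cnj_mult_self: "cnj z * z = complex_of_real ((cmod z)^2)"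
  by (metis complex_norm_square mult.commute of_real_power)

lemma nrm2_eq: "complex_of_real (nrm2 d x) = (\<Sum>i<d. cnj (x i) * x i)"
  unfolding nrm2_def by (simp add: cnj_mult_self)

lemma nrm2_nonneg: "0 \<le> nrm2 d x" unfolding nrm2_def by (simp add: sum_nonneg)

lemma nrm2_zero: "nrm2 d x = 0 \<Longrightarrow> i < d \<Longrightarrow> x i = 0"
  unfolding nrm2_def by (subst (asm) sum_nonneg_eq_0_iff, auto)

lemma bf_expand: "bf d A (\<lambda>i. x i + complex_of_real t * y i) (\<lambda>i. x i + complex_of_real t * y i)
   = bf d A x x + complex_of_real t * bf d A x y + complex_of_real t * bf d A y x + complex_of_real (t^2) * bf d A y y"
  by (simp add: bf_add_left bf_add_right bf_scale_left bf_scale_right algebra_simps power2_eq_square)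

lemma bf_expand_re: assumes "hermitian_mat d A"
  shows "Re (bf d A (\<lambda>i. x i + complex_of_real t * y i) (\<lambda>i. x i + complex_of_real t * y i))
   = Re (bf d A x x) + 2 * t * Re (bf d A y x) + t^2 * Re (bf d A y y)"
proof -
  have "Re (bf d A x y) = Re (bf d A y x)" using bf_herm_swap[OF assms, of x y] by simp
  then show ?thesis unfolding bf_expand by simp
qed

lemma psd_zero_form: assumes "psd d A" "Re (bf d A x x) = 0" "i < d"
  shows "mv d A x i = 0"
proof -
  have h: "hermitian_mat d A" and q: "\<And>z. 0 \<le> Re (bf d A z z)" using assms(1) unfolding psd_iff by auto
  define y where "y = mv d A x"
  have yx: "bf d A y x = complex_of_real (nrm2 d y)" unfolding bf_mv nrm2_eq y_def ..
  have "0 \<le> 2*t*(- nrm2 d y) + t^2 * Re (bf d A y y)" if "t > 0" for t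
  proof -
    have "0 \<le> Re (bf d A (\<lambda>i. x i + complex_of_real (-t) * y i) (\<lambda>i. x i + complex_of_real (-t) * y i))" by (rule q)
    also have "\<dots> = 2*t*(- nrm2 d y) + t^2 * Re (bf d A y y)"
      unfolding bf_expand_re[OF h] yx using assms(2) by simp
    finally show ?thesis .
  qed
  from quad_nonneg_imp[OF this] have "nrm2 d y = 0" using nrm2_nonneg[of d y] by simp
  then show ?thesis using nrm2_zero assms(3) unfolding y_def by auto
qed

lemma bw_real:
  fixes s :: "nat \<Rightarrow> real"
  assumes "\<And>n. \<bar>s n\<bar> \<le> B"
  shows "\<exists>r l. strict_mono r \<and> (\<lambda>n. s (r n)) \<longlonglongrightarrow> l"
proof -
  obtain r where r: "strict_mono r" and m: "monoseq (\<lambda>n. s (r n))" using seq_monosub by blast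
  have "Bseq (\<lambda>n. s (r n))" using assms by (intro BseqI'[of _ B], auto)
  from Bseq_monoseq_convergent[OF this m] show ?thesis using r unfolding convergent_def by blast
qed

lemma bw_complex:
  fixes s :: "nat \<Rightarrow> complex"
  assumes "\<And>n. norm (s n) \<le> B"
  shows "\<exists>r l. strict_mono r \<and> (\<lambda>n. s (r n)) \<longlonglongrightarrow> l"
proof -
  have "\<bar>Re (s n)\<bar> \<le> B" for n using assms[of n] abs_Re_le_cmod[of "s n"] by linarith
  then obtain r1 a where r1: "strict_mono r1" and a: "(\<lambda>n. Re (s (r1 n))) \<longlonglongrightarrow> a" using bw_real[of "\<lambda>n. Re (s n)" B] by blast
  have "\<bar>Im (s (r1 n))\<bar> \<le> B" for n using assms[of "r1 n"] abs_Im_le_cmod[of "s (r1 n)"] by linarith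
  then obtain r2 b where r2: "strict_mono r2" and b: "(\<lambda>n. Im (s (r1 (r2 n)))) \<longlonglongrightarrow> b" using bw_real[of "\<lambda>n. Im (s (r1 n))"] by blast
  have a2: "(\<lambda>n. Re (s (r1 (r2 n)))) \<longlonglongrightarrow> a" using LIMSEQ_subseq_LIMSEQ[OF a r2] by (simp add: o_def)
  have "(\<lambda>n. s (r1 (r2 n))) \<longlonglongrightarrow> Complex a b" unfolding tendsto_complex_iff using a2 b by simp
  moreover have "strict_mono (r1 \<circ> r2)" using r1 r2 by (simp add: strict_mono_o)
  ultimately show ?thesis by (auto simp: o_def)
qed

lemma bw_finite:
  fixes f :: "nat \<Rightarrow> 'i \<Rightarrow> complex"
  assumes "finite I" "\<And>n i. i \<in> I \<Longrightarrow> norm (f n i) \<le> B"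
  shows "\<exists>r g. strict_mono r \<and> (\<forall>i\<in>I. (\<lambda>n. f (r n) i) \<longlonglongrightarrow> g i)"
  using assms
proof (induction I)
  case empty
  show ?case by (rule exI[of _ id], auto simp: strict_mono_def)
next
  case (insert a I)
  from insert obtain r g where r: "strict_mono r" and g: "\<forall>i\<in>I. (\<lambda>n. f (r n) i) \<longlonglongrightarrow> g i" by auto
  obtain l r' where
    r': "strict_mono r'" and l: "((\<lambda>n. f (r n) a) \<circ> r') \<longlonglongrightarrow> l"
    using bw_complex[of "\<lambda>n. f (r n) a" B] insert.prems by (auto simp: o_def)
  show ?case
  proof (intro exI conjI ballI)
    show "strict_mono (r \<circ> r')" using r r' by (simp add: strict_mono_o)
    fix i assume i: "i \<in> insert a I"
    show "(\<lambda>n. f ((r \<circ> r') n) i) \<longlonglongrightarrow> (g(a := l)) i"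
    proof (cases "i = a")
      case True then show ?thesis using l by (simp add: o_def)
    next
      case False
      then have "i \<in> I" using i by auto
      then have "(\<lambda>n. f (r n) i) \<longlonglongrightarrow> g i" using g by auto
      from LIMSEQ_subseq_LIMSEQ[OF this r'] show ?thesis using False by (simp add: o_def)
    qed
  qed
qed

lemma attains_max:
  fixes F :: "('i \<Rightarrow> complex) \<Rightarrow> real"
  assumes fin: "finite I" and ne: "x0 \<in> S" and bnd: "\<And>x i. x \<in> S \<Longrightarrow> i \<in> I \<Longrightarrow> norm (x i) \<le> B"
   and clo: "\<And>x g. (\<And>n. x n \<in> S) \<Longrightarrow> (\<And>i. i \<in> I \<Longrightarrow> (\<lambda>n. x n i) \<longlonglongrightarrow> g i) \<Longrightarrow> g \<in> S"
   and cont: "\<And>x g. (\<And>n. x n \<in> S) \<Longrightarrow> (\<And>i. i \<in> I \<Longrightarrow> (\<lambda>n. x n i) \<longlonglongrightarrow> g i) \<Longrightarrow> (\<lambda>n. F (x n)) \<longlonglongrightarrow> F g"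
  shows "\<exists>x\<in>S. \<forall>y\<in>S. F y \<le> F x"
proof -
  have sub: "\<exists>r g. strict_mono r \<and> g \<in> S \<and> (\<lambda>n. F (x (r n))) \<longlonglongrightarrow> F g" if xS: "\<And>n. x n \<in> S" for x :: "nat \<Rightarrow> 'i \<Rightarrow> complex"
  proof -
    obtain r g where r: "strict_mono r" and g: "\<forall>i\<in>I. (\<lambda>n. x (r n) i) \<longlonglongrightarrow> g i"
      using bw_finite[OF fin, of "\<lambda>n. x n" B] bnd xS by blast
    have "g \<in> S" by (rule clo[of "\<lambda>n. x (r n)"], use xS g in auto)
    moreover have "(\<lambda>n. F (x (r n))) \<longlonglongrightarrow> F g" by (rule cont[of "\<lambda>n. x (r n)"], use xS g in auto)
    ultimately show ?thesis using r by blast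
  qed
  have bdd: "bdd_above (F ` S)"
  proof (rule ccontr)
    assume nb: "\<not> bdd_above (F ` S)"
    have "\<forall>n::nat. \<exists>x\<in>S. F x > real n"
    proof
      fix n :: nat
      from nb obtain y where "y \<in> F ` S" "\<not> y \<le> real n" unfolding bdd_above_def by blast
      then show "\<exists>x\<in>S. F x > real n" by force
    qed
    then obtain x where xS: "\<And>n. x n \<in> S" and xF: "\<And>n. F (x n) > real n" by metis
    from sub[of x, OF xS] obtain r g where r: "strict_mono r" and lim: "(\<lambda>n. F (x (r n))) \<longlonglongrightarrow> F g" by blast
    have "\<forall>\<^sub>F n in sequentially. dist (F (x (r n))) (F g) < 1" using lim by (rule tendstoD, simp)
    then obtain N where N: "\<And>n. n \<ge> N \<Longrightarrow> dist (F (x (r n))) (F g) < 1" unfolding eventually_sequentially by blast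
    define n where "n = max N (nat \<lceil>F g + 1\<rceil>)"
    have "dist (F (x (r n))) (F g) < 1" using N n_def by auto
    moreover have "F (x (r n)) > real (r n)" by (rule xF)
    moreover have "r n \<ge> n" using r by (simp add: seq_suble)
    moreover have "real n \<ge> F g + 1" unfolding n_def by linarith
    ultimately show False by (simp add: dist_real_def)
  qed
  define s where "s = Sup (F ` S)"
  have "\<forall>n::nat. \<exists>x\<in>S. F x > s - 1 / (real n + 1)"
  proof
    fix n :: nat
    have "s - 1 / (real n + 1) < s" by simp
    then show "\<exists>x\<in>S. F x > s - 1 / (real n + 1)" unfolding s_def using less_cSup_iff[of "F ` S"] ne bdd by blast
  qed
  then obtain x where xS: "\<And>n. x n \<in> S" and xF: "\<And>n. F (x n) > s - 1 / (real n + 1)" by metis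
  from sub[of x, OF xS] obtain r g where r: "strict_mono r" and gS: "g \<in> S" and lim: "(\<lambda>n. F (x (r n))) \<longlonglongrightarrow> F g" by blast
  have l2: "(\<lambda>n. s - 1 / (real n + 1)) \<longlonglongrightarrow> s - 0"
  proof -
    have l1: "(\<lambda>n. 1 / (real n + 1)) \<longlonglongrightarrow> 0"
      using LIMSEQ_inverse_real_of_nat by (simp add: inverse_eq_divide add.commute)
    show ?thesis by (intro tendsto_diff tendsto_const l1)
  qed
  have "s - 0 \<le> F g"
  proof (rule LIMSEQ_le[OF l2 lim], intro exI allI impI)
    fix n :: nat
    have "r n \<ge> n" using r by (simp add: seq_suble)
    then have "1 / (real (r n) + 1) \<le> 1 / (real n + 1)" by (simp add: frac_le)
    then show "s - 1 / (real n + 1) \<le> F (x (r n))" using xF[of "r n"] by linarith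
  qed
  moreover have "\<forall>y\<in>S. F y \<le> s" unfolding s_def using bdd by (simp add: cSup_upper)
  ultimately show ?thesis using gS by force
qed

definition inr :: "nat \<Rightarrow> (nat \<Rightarrow> complex) \<Rightarrow> (nat \<Rightarrow> complex) \<Rightarrow> complex" where
  "inr d x y = (\<Sum>i<d. cnj (x i) * y i)"

lemma inr_swap: "inr d y x = cnj (inr d x y)"
  unfolding inr_def by (simp add: mult.commute)
lemma inr_self: "inr d x x = complex_of_real (nrm2 d x)" unfolding inr_def nrm2_eq ..
lemma inr_add_right: "inr d z (\<lambda>i. x i + y i) = inr d z x + inr d z y"
  unfolding inr_def by (simp add: ring_distribs sum.distrib)
lemma inr_scale_right: "inr d z (\<lambda>i. c * x i) = c * inr d z x"
  unfolding inr_def by (simp add: sum_distrib_left mult.left_commute)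
lemma inr_diff_right: "inr d z (\<lambda>i. x i - y i) = inr d z x - inr d z y"
  unfolding inr_def by (simp add: ring_distribs sum_subtractf)
lemma inr_add_left: "inr d (\<lambda>i. x i + y i) z = inr d x z + inr d y z"
  unfolding inr_def by (simp add: ring_distribs sum.distrib)
lemma inr_scale_left: "inr d (\<lambda>i. c * x i) z = cnj c * inr d x z"
  unfolding inr_def by (simp add: sum_distrib_left mult.assoc)
lemma inr_cong: "(\<And>i. i < d \<Longrightarrow> x i = x' i) \<Longrightarrow> (\<And>i. i < d \<Longrightarrow> y i = y' i) \<Longrightarrow> inr d x y = inr d x' y'"
  unfolding inr_def by (auto intro!: sum.cong)

lemma bf_eq_inr: "bf d A y x = inr d y (mv d A x)"
  unfolding bf_mv inr_def ..

lemma nrm2_scale: "nrm2 d (\<lambda>i. c * x i) = (cmod c)^2 * nrm2 d x"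
  unfolding nrm2_def by (simp add: norm_mult power_mult_distrib sum_distrib_left)

lemma nrm2_cong: "(\<And>i. i < d \<Longrightarrow> x i = x' i) \<Longrightarrow> nrm2 d x = nrm2 d x'"
  unfolding nrm2_def by (auto intro!: sum.cong)

lemma sum_delta_mult: "(\<Sum>i<(d::nat). f i * (if i = j then 1 else 0)) = (if j < d then f j else (0::'a::comm_semiring_1))"
  by (induction d) (auto simp: less_Suc_eq)

definition orth :: "nat \<Rightarrow> nat \<Rightarrow> (nat \<Rightarrow> nat \<Rightarrow> complex) \<Rightarrow> bool" where
  "orth d k u \<longleftrightarrow> (\<forall>a<k. \<forall>b<k. inr d (u a) (u b) = (if a = b then 1 else 0))"

definition eigen :: "nat \<Rightarrow> complex mat \<Rightarrow> (nat \<Rightarrow> complex) \<Rightarrow> real \<Rightarrow> bool" where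
  "eigen d A w \<mu> \<longleftrightarrow> (\<forall>i<d. mv d A w i = complex_of_real \<mu> * w i)"

lemma eigen_inr: assumes h: "hermitian_mat d A" and e: "eigen d A v lam"
  shows "inr d v (mv d A w) = complex_of_real lam * inr d v w"
proof -
  have "inr d v (mv d A w) = bf d A v w" unfolding bf_eq_inr ..
  also have "\<dots> = cnj (bf d A w v)" by (rule bf_herm_swap[OF h])
  also have "bf d A w v = inr d w (\<lambda>i. complex_of_real lam * v i)"
    unfolding bf_eq_inr using e unfolding eigen_def by (intro inr_cong, auto)
  also have "\<dots> = complex_of_real lam * inr d w v" by (rule inr_scale_right)
  finally show ?thesis by (simp add: inr_swap[of d v w])
qed

lemma exists_orth_vec: assumes o: "orth d k u" and k: "k < d"
  shows "\<exists>z. (\<forall>a<k. inr d (u a) z = 0) \<and> nrm2 d z = 1"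
proof -
  define p where "p j = (\<lambda>i. (if i = j then 1 else 0) - (\<Sum>a<k. u a i * cnj (u a j)))" for j
  have pW: "inr d (u b) (p j) = 0" if b: "b < k" and j: "j < d" for b j
  proof -
    have "inr d (u b) (\<lambda>i. if i = j then 1 else 0) = cnj (u b j)"
      unfolding inr_def sum_delta_mult using j by simp
    moreover have "inr d (u b) (\<lambda>i. \<Sum>a<k. u a i * cnj (u a j)) = (\<Sum>a<k. inr d (u b) (u a) * cnj (u a j))"
      unfolding inr_def by (simp add: sum_distrib_left sum_distrib_right mult.assoc sum.swap[of _ "{..<d}"])
    moreover have "\<dots> = (\<Sum>a<k. (if b = a then 1 else 0) * cnj (u a j))"
      using o b unfolding orth_def by (intro sum.cong refl, auto)
    moreover have "\<dots> = cnj (u b j)" using b by (simp add: if_distrib[of "\<lambda>x. x * _"] cong: if_cong)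
    ultimately show ?thesis unfolding p_def inr_diff_right by simp
  qed
  have "\<exists>j<d. nrm2 d (p j) \<noteq> 0"
  proof (rule ccontr)
    assume "\<not> (\<exists>j<d. nrm2 d (p j) \<noteq> 0)"
    then have z: "\<And>i j. i < d \<Longrightarrow> j < d \<Longrightarrow> p j i = 0" using nrm2_zero by blast
    have "complex_of_real (real d) = (\<Sum>j<d. (1::complex))" by simp
    also have "\<dots> = (\<Sum>j<d. \<Sum>a<k. u a j * cnj (u a j))"
    proof (intro sum.cong refl)
      fix j assume "j \<in> {..<d}"
      then have "p j j = 0" using z by auto
      then show "1 = (\<Sum>a<k. u a j * cnj (u a j))" unfolding p_def by simp
    qed
    also have "\<dots> = (\<Sum>a<k. inr d (u a) (u a))" unfolding inr_def
      by (subst sum.swap, simp add: mult.commute)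
    also have "\<dots> = (\<Sum>a<k. (1::complex))" using o unfolding orth_def by (intro sum.cong refl, auto)
    also have "\<dots> = complex_of_real (real k)" by simp
    finally have "real d = real k" using of_real_eq_iff by blast
    then show False using k by simp
  qed
  then obtain j where j: "j < d" and n0: "nrm2 d (p j) \<noteq> 0" by blast
  define N where "N = nrm2 d (p j)"
  have N: "N > 0" using n0 nrm2_nonneg[of d "p j"] unfolding N_def by linarith
  define z where "z = (\<lambda>i. complex_of_real (1 / sqrt N) * p j i)"
  have cm: "cmod (complex_of_real (1 / sqrt N)) = 1 / sqrt N" using N by (subst norm_of_real) simp
  have "nrm2 d z = (1 / sqrt N)^2 * N" unfolding z_def nrm2_scale cm unfolding N_def ..
  also have "\<dots> = 1" using N by (simp add: power_divide)
  finally have "nrm2 d z = 1" .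
  moreover have "\<forall>a<k. inr d (u a) z = 0" unfolding z_def inr_scale_right using pW j by simp
  ultimately show ?thesis by blast
qed

lemma nrm2_expand: "nrm2 d (\<lambda>i. x i + complex_of_real t * y i) = nrm2 d x + 2 * t * Re (inr d x y) + t^2 * nrm2 d y"
proof -
  have "complex_of_real (nrm2 d (\<lambda>i. x i + complex_of_real t * y i))
     = inr d x x + complex_of_real t * inr d x y + complex_of_real t * inr d y x + complex_of_real (t^2) * inr d y y"
    unfolding inr_self[symmetric]
    by (simp add: inr_add_left inr_add_right inr_scale_left inr_scale_right algebra_simps power2_eq_square)
  then have "nrm2 d (\<lambda>i. x i + complex_of_real t * y i) = Re (inr d x x + complex_of_real t * inr d x y + complex_of_real t * inr d y x + complex_of_real (t^2) * inr d y y)"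
    by (metis Re_complex_of_real)
  also have "\<dots> = nrm2 d x + 2 * t * Re (inr d x y) + t^2 * nrm2 d y"
    using inr_swap[of d y x] by (simp add: inr_self)
  finally show ?thesis .
qed

lemma eigen_step:
  assumes h: "hermitian_mat d A" and o: "orth d k u" and e: "\<forall>a<k. eigen d A (u a) (lam a)" and k: "k < d"
  shows "\<exists>w \<mu>. (\<forall>a<k. inr d (u a) w = 0) \<and> nrm2 d w = 1 \<and> eigen d A w \<mu>"
proof -
  define S where "S = {z. (\<forall>a<k. inr d (u a) z = 0) \<and> nrm2 d z = 1}"
  obtain z0 where z0: "z0 \<in> S" using exists_orth_vec[OF o k] unfolding S_def by auto
  define F where "F z = Re (bf d A z z)" for z
  have bnd: "norm (x i) \<le> 1" if "x \<in> S" "i \<in> {..<d}" for x i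
  proof -
    have "(cmod (x i))^2 \<le> nrm2 d x" unfolding nrm2_def using that(2) by (intro member_le_sum) auto
    then have "(cmod (x i))^2 \<le> 1" using that(1) unfolding S_def by simp
    then show ?thesis using power2_le_imp_le[of "cmod (x i)" 1] by simp
  qed
  have lim_inr: "(\<lambda>n. inr d v (x n)) \<longlonglongrightarrow> inr d v g" if "\<And>i. i \<in> {..<d} \<Longrightarrow> (\<lambda>n. x n i) \<longlonglongrightarrow> g i" for v x g
    unfolding inr_def using that by (auto intro!: tendsto_sum tendsto_mult tendsto_const)
  have lim_nrm: "(\<lambda>n. nrm2 d (x n)) \<longlonglongrightarrow> nrm2 d g" if "\<And>i. i \<in> {..<d} \<Longrightarrow> (\<lambda>n. x n i) \<longlonglongrightarrow> g i" for x g
    unfolding nrm2_def using that by (auto intro!: tendsto_sum tendsto_power tendsto_norm)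
  have lim_bf: "(\<lambda>n. bf d A (x n) (x n)) \<longlonglongrightarrow> bf d A g g" if "\<And>i. i \<in> {..<d} \<Longrightarrow> (\<lambda>n. x n i) \<longlonglongrightarrow> g i" for x g
    unfolding bf_def using that by (auto intro!: tendsto_sum tendsto_mult tendsto_cnj tendsto_const)
  have clo: "g \<in> S" if xs: "\<And>n. x n \<in> S" and xg: "\<And>i. i \<in> {..<d} \<Longrightarrow> (\<lambda>n. x n i) \<longlonglongrightarrow> g i" for x g
  proof -
    have "inr d (u a) g = 0" if a: "a < k" for a
    proof -
      have "(\<lambda>n. inr d (u a) (x n)) \<longlonglongrightarrow> inr d (u a) g" by (rule lim_inr, rule xg)
      moreover have "inr d (u a) (x n) = 0" for n using xs[of n] a unfolding S_def by auto
      ultimately have "(\<lambda>n. 0) \<longlonglongrightarrow> inr d (u a) g" by simp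
      then show ?thesis using LIMSEQ_const_iff by metis
    qed
    moreover have "nrm2 d g = 1"
    proof -
      have "(\<lambda>n. nrm2 d (x n)) \<longlonglongrightarrow> nrm2 d g" by (rule lim_nrm, rule xg)
      moreover have "nrm2 d (x n) = 1" for n using xs[of n] unfolding S_def by auto
      ultimately have "(\<lambda>n. 1) \<longlonglongrightarrow> nrm2 d g" by simp
      then show ?thesis using LIMSEQ_const_iff by metis
    qed
    ultimately show ?thesis unfolding S_def by auto
  qed
  have cont: "(\<lambda>n. F (x n)) \<longlonglongrightarrow> F g" if "\<And>n. x n \<in> S" and xg: "\<And>i. i \<in> {..<d} \<Longrightarrow> (\<lambda>n. x n i) \<longlonglongrightarrow> g i" for x g
    unfolding F_def by (intro tendsto_Re lim_bf xg)
  obtain w where wS: "w \<in> S" and wmax: "\<forall>y\<in>S. F y \<le> F w"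
    using attains_max[of "{..<d}" z0 S 1 F] z0 bnd clo cont by blast
  define \<mu> where "\<mu> = F w"
  have W_le: "Re (bf d A v v) \<le> \<mu> * nrm2 d v" if v: "\<forall>a<k. inr d (u a) v = 0" for v
  proof (cases "nrm2 d v = 0")
    case True
    then have "bf d A v v = bf d A (\<lambda>_. 0) (\<lambda>_. 0)" using nrm2_zero by (intro bf_cong) auto
    then show ?thesis using True by (simp add: bf_def)
  next
    case False
    define N where "N = nrm2 d v"
    have N: "N > 0" using False nrm2_nonneg[of d v] unfolding N_def by linarith
    define c where "c = 1 / sqrt N"
    define v' where "v' = (\<lambda>i. complex_of_real c * v i)"
    have cm: "cmod (complex_of_real c) = c" using N unfolding c_def by (subst norm_of_real) simp
    have "nrm2 d v' = c^2 * N" unfolding v'_def nrm2_scale cm unfolding N_def ..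
    also have "\<dots> = 1" using N unfolding c_def by (simp add: power_divide)
    finally have "nrm2 d v' = 1" .
    moreover have "\<forall>a<k. inr d (u a) v' = 0" unfolding v'_def inr_scale_right using v by simp
    ultimately have "v' \<in> S" unfolding S_def by simp
    then have "F v' \<le> \<mu>" using wmax unfolding \<mu>_def by auto
    moreover have "F v' = c^2 * Re (bf d A v v)"
      unfolding F_def v'_def bf_scale_left bf_scale_right by (simp add: power2_eq_square)
    moreover have cN: "c^2 * N = 1" using N unfolding c_def by (simp add: power_divide)
    moreover have "c^2 * (\<mu> * N) = \<mu>" using cN by (metis mult.commute mult.left_commute mult.right_neutral)
    ultimately have "c^2 * Re (bf d A v v) \<le> c^2 * (\<mu> * N)" by linarith
    moreover have "c^2 > 0" using N unfolding c_def by simp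
    ultimately show ?thesis unfolding N_def by simp
  qed
  have wW: "\<forall>a<k. inr d (u a) w = 0" and nw: "nrm2 d w = 1" using wS unfolding S_def by auto
  define r where "r = (\<lambda>i. mv d A w i - complex_of_real \<mu> * w i)"
  have rW: "\<forall>a<k. inr d (u a) r = 0"
  proof (intro allI impI)
    fix a assume a: "a < k"
    have "inr d (u a) r = inr d (u a) (mv d A w) - complex_of_real \<mu> * inr d (u a) w"
      unfolding r_def inr_diff_right inr_scale_right ..
    also have "\<dots> = 0" using eigen_inr[OF h, of "u a" "lam a" w] e wW a by simp
    finally show "inr d (u a) r = 0" .
  qed
  have bfw: "bf d A w w = complex_of_real \<mu>"
    using bf_herm_real[OF h, of w] unfolding \<mu>_def F_def by (simp add: complex_eq_iff)
  have rw: "inr d r w = 0"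
  proof -
    have "inr d w r = inr d w (mv d A w) - complex_of_real \<mu> * inr d w w"
      unfolding r_def inr_diff_right inr_scale_right ..
    also have "\<dots> = 0" using bfw nw unfolding bf_eq_inr inr_self by simp
    finally show ?thesis using inr_swap[of d r w] by simp
  qed
  have mvw: "mv d A w = (\<lambda>i. r i + complex_of_real \<mu> * w i)" unfolding r_def by auto
  have brw: "bf d A r w = complex_of_real (nrm2 d r)"
    unfolding bf_eq_inr mvw inr_add_right inr_scale_right rw inr_self by simp
  have ineq: "0 \<le> 2*t*(- nrm2 d r) + t^2*(\<mu> * nrm2 d r - Re (bf d A r r))" if t: "t > 0" for t
  proof -
    define v where "v = (\<lambda>i. w i + complex_of_real t * r i)"
    have "\<forall>a<k. inr d (u a) v = 0" unfolding v_def inr_add_right inr_scale_right using wW rW by simp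
    from W_le[OF this] have "Re (bf d A v v) \<le> \<mu> * nrm2 d v" .
    moreover have "Re (bf d A v v) = \<mu> + 2 * t * nrm2 d r + t^2 * Re (bf d A r r)"
      unfolding v_def bf_expand_re[OF h] bfw brw by simp
    moreover have "nrm2 d v = 1 + t^2 * nrm2 d r"
      unfolding v_def nrm2_expand nw using rw inr_swap[of d w r] by simp
    ultimately show ?thesis by (simp add: algebra_simps)
  qed
  have "0 \<le> - nrm2 d r" by (rule quad_nonneg_imp, rule ineq)
  then have "nrm2 d r = 0" using nrm2_nonneg[of d r] by linarith
  then have "\<forall>i<d. r i = 0" using nrm2_zero by blast
  then have "eigen d A w \<mu>" unfolding eigen_def r_def by simp
  then show ?thesis using wW nw by blast
qed

lemma spectral_family:
  assumes h: "hermitian_mat d A"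
  shows "k \<le> d \<Longrightarrow> \<exists>u lam. orth d k u \<and> (\<forall>a<k. eigen d A (u a) (lam a))"
proof (induction k)
  case 0
  then show ?case unfolding orth_def by auto
next
  case (Suc k)
  then obtain u lam where o: "orth d k u" and e: "\<forall>a<k. eigen d A (u a) (lam a)" by auto
  from eigen_step[OF h o e] Suc.prems obtain w \<mu> where
    wW: "\<forall>a<k. inr d (u a) w = 0" and nw: "nrm2 d w = 1" and ew: "eigen d A w \<mu>" by auto
  define u' where "u' = u(k := w)"
  define lam' where "lam' = lam(k := \<mu>)"
  have "orth d (Suc k) u'" unfolding orth_def
  proof (intro allI impI)
    fix a b assume a: "a < Suc k" and b: "b < Suc k"
    show "inr d (u' a) (u' b) = (if a = b then 1 else 0)"
    proof (cases "a = k")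
      case True
      show ?thesis
      proof (cases "b = k")
        case True
        then show ?thesis using \<open>a = k\<close> nw unfolding u'_def by (simp add: inr_self)
      next
        case False
        then have "b < k" using b by simp
        then show ?thesis using \<open>a = k\<close> False wW inr_swap[of d w "u b"] unfolding u'_def by simp
      qed
    next
      case False
      then have ak: "a < k" using a by simp
      show ?thesis
      proof (cases "b = k")
        case True
        then show ?thesis using ak wW unfolding u'_def by simp
      next
        case False
        then have "b < k" using b by simp
        then show ?thesis using ak o False \<open>a \<noteq> k\<close> unfolding u'_def orth_def by simp
      qed
    qed
  qed
  moreover have "\<forall>a<Suc k. eigen d A (u' a) (lam' a)"
    using e ew unfolding u'_def lam'_def by (auto simp: less_Suc_eq)
  ultimately show ?case by blast
qed

lemma completeness:
  assumes o: "orth d d u" and i: "i < d" and j: "j < d"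
  shows "(\<Sum>a<d. u a i * cnj (u a j)) = (if i = j then 1 else 0)"
proof -
  define U where "U = mat d d (\<lambda>(i,a). u a i)"
  define V where "V = mat d d (\<lambda>(a,i). cnj (u a i))"
  have U: "U \<in> carrier_mat d d" and V: "V \<in> carrier_mat d d" unfolding U_def V_def by auto
  have "V * U = 1\<^sub>m d"
  proof (rule eq_matI)
    fix a b assume "a < dim_row (1\<^sub>m d)" "b < dim_col (1\<^sub>m d)"
    then have ab: "a < d" "b < d" by auto
    have "(V * U) $$ (a,b) = (\<Sum>l<d. V $$ (a,l) * U $$ (l,b))" by (rule mult_index[OF V U ab])
    also have "\<dots> = inr d (u a) (u b)" unfolding inr_def U_def V_def using ab by (intro sum.cong) auto
    also have "\<dots> = 1\<^sub>m d $$ (a,b)" using o ab unfolding orth_def by simp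
    finally show "(V * U) $$ (a,b) = 1\<^sub>m d $$ (a,b)" .
  qed (use U V in auto)
  then have UV: "U * V = 1\<^sub>m d" using mat_mult_left_right_inverse[OF V U] by simp
  have "(\<Sum>a<d. u a i * cnj (u a j)) = (\<Sum>l<d. U $$ (i,l) * V $$ (l,j))"
    unfolding U_def V_def using i j by (intro sum.cong) auto
  also have "\<dots> = (U * V) $$ (i,j)" by (rule mult_index[OF U V i j, symmetric])
  also have "\<dots> = (if i = j then 1 else 0)" unfolding UV using i j by simp
  finally show ?thesis .
qed

lemma reconstruct:
  assumes o: "orth d d u" and e: "\<forall>a<d. eigen d M (u a) (lam a)" and i: "i < d" and j: "j < d"
  shows "M $$ (i,j) = (\<Sum>a<d. complex_of_real (lam a) * u a i * cnj (u a j))"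
proof -
  have "M $$ (i,j) = (\<Sum>l<d. M $$ (i,l) * (if l = j then 1 else 0))" by (subst sum_delta_mult) (simp add: j)
  also have "\<dots> = (\<Sum>l<d. M $$ (i,l) * (\<Sum>a<d. u a l * cnj (u a j)))"
    using completeness[OF o _ j] by (intro sum.cong) auto
  also have "\<dots> = (\<Sum>a<d. (\<Sum>l<d. M $$ (i,l) * u a l) * cnj (u a j))"
    unfolding sum_distrib_left sum_distrib_right mult.assoc by (rule sum.swap)
  also have "\<dots> = (\<Sum>a<d. mv d M (u a) i * cnj (u a j))" unfolding mv_def ..
  also have "\<dots> = (\<Sum>a<d. complex_of_real (lam a) * u a i * cnj (u a j))"
    using e i unfolding eigen_def by (intro sum.cong) auto
  finally show ?thesis .
qed

lemma spectral:
  assumes h: "hermitian_mat d A"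
  shows "\<exists>u lam. orth d d u \<and> (\<forall>a<d. eigen d A (u a) (lam a))"
  using spectral_family[OF h, of d] by simp

lemma psd_eig_nonneg: assumes p: "psd d A" and o: "orth d d u" and e: "eigen d A (u a) lam" and a: "a < d"
  shows "lam \<ge> 0"
proof -
  have "bf d A (u a) (u a) = inr d (u a) (\<lambda>i. complex_of_real lam * u a i)"
    unfolding bf_eq_inr using e unfolding eigen_def by (intro inr_cong) auto
  also have "\<dots> = complex_of_real lam" unfolding inr_scale_right using o a unfolding orth_def by simp
  finally show ?thesis using p unfolding psd_iff by (metis Re_complex_of_real)
qed

definition gm :: "nat \<Rightarrow> (nat \<Rightarrow> nat \<Rightarrow> complex) \<Rightarrow> (nat \<Rightarrow> real) \<Rightarrow> complex mat" where
  "gm d u c = mat d d (\<lambda>(i,j). \<Sum>a<d. complex_of_real (c a) * u a i * cnj (u a j))"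

lemma gm_carrier: "gm d u c \<in> carrier_mat d d" unfolding gm_def by auto

lemma gm_herm: "hermitian_mat d (gm d u c)"
  unfolding herm_iff gm_def by (auto simp: gm_carrier mult_ac)

lemma gm_bf: "bf d (gm d u c) x y = (\<Sum>a<d. complex_of_real (c a) * cnj (inr d (u a) x) * inr d (u a) y)"
proof -
  have "bf d (gm d u c) x y = (\<Sum>i<d. \<Sum>j<d. \<Sum>a<d. complex_of_real (c a) * (cnj (x i) * u a i) * (cnj (u a j) * y j))"
    unfolding bf_def gm_def by (intro sum.cong refl) (simp add: sum_distrib_left sum_distrib_right mult_ac)
  also have "\<dots> = (\<Sum>i<d. \<Sum>a<d. \<Sum>j<d. complex_of_real (c a) * (cnj (x i) * u a i) * (cnj (u a j) * y j))"
    by (rule sum.cong[OF refl]) (rule sum.swap)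
  also have "\<dots> = (\<Sum>a<d. \<Sum>i<d. \<Sum>j<d. complex_of_real (c a) * (cnj (x i) * u a i) * (cnj (u a j) * y j))"
    by (rule sum.swap)
  also have "\<dots> = (\<Sum>a<d. complex_of_real (c a) * cnj (inr d (u a) x) * inr d (u a) y)"
    unfolding inr_def by (simp add: sum_distrib_left sum_distrib_right mult_ac)
  finally show ?thesis .
qed

lemma gm_psd: assumes "\<forall>a<d. c a \<ge> 0" shows "psd d (gm d u c)"
  unfolding psd_iff
proof (intro conjI allI gm_herm)
  fix x
  have "Re (bf d (gm d u c) x x) = (\<Sum>a<d. c a * (cmod (inr d (u a) x))^2)"
    unfolding gm_bf by (simp add: Re_sum mult.assoc cnj_mult_self)
  also have "\<dots> \<ge> 0" using assms by (intro sum_nonneg) auto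
  finally show "0 \<le> Re (bf d (gm d u c) x x)" .
qed

lemma gm_eigen: assumes o: "orth d d u" and b: "b < d" shows "eigen d (gm d u c) (u b) (c b)"
  unfolding eigen_def
proof (intro allI impI)
  fix i assume i: "i < d"
  have "mv d (gm d u c) (u b) i = (\<Sum>l<d. \<Sum>a<d. complex_of_real (c a) * u a i * (cnj (u a l) * u b l))"
    unfolding mv_def gm_def using i by (intro sum.cong[OF refl]) (simp add: sum_distrib_left sum_distrib_right mult_ac)
  also have "\<dots> = (\<Sum>a<d. complex_of_real (c a) * u a i * inr d (u a) (u b))"
    unfolding inr_def by (subst sum.swap) (simp add: sum_distrib_left)
  also have "\<dots> = (\<Sum>a<d. complex_of_real (c a) * u a i * (if a = b then 1 else 0))"
    using o b unfolding orth_def by (intro sum.cong refl) auto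
  also have "\<dots> = complex_of_real (c b) * u b i" unfolding sum_delta_mult using b by simp
  finally show "mv d (gm d u c) (u b) i = complex_of_real (c b) * u b i" .
qed

lemma mv_mult: assumes P: "P \<in> carrier_mat d d" and Q: "Q \<in> carrier_mat d d" and i: "i < d"
  shows "mv d (P * Q) x i = mv d P (mv d Q x) i"
proof -
  have "mv d (P * Q) x i = (\<Sum>j<d. (\<Sum>l<d. P $$ (i,l) * Q $$ (l,j)) * x j)"
    unfolding mv_def using mult_index[OF P Q i] by (intro sum.cong) auto
  also have "\<dots> = (\<Sum>l<d. P $$ (i,l) * (\<Sum>j<d. Q $$ (l,j) * x j))"
    unfolding sum_distrib_left sum_distrib_right mult.assoc by (rule sum.swap)
  also have "\<dots> = mv d P (mv d Q x) i" unfolding mv_def ..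
  finally show ?thesis .
qed

lemma mv_cong: "(\<And>j. j < d \<Longrightarrow> x j = y j) \<Longrightarrow> mv d A x i = mv d A y i"
  unfolding mv_def by (auto intro!: sum.cong)

lemma mv_diff: "mv d A (\<lambda>j. x j - c * y j) i = mv d A x i - c * mv d A y i"
  unfolding mv_def by (simp add: algebra_simps sum_subtractf sum_distrib_left)

lemma mat_eq_entries: "A \<in> carrier_mat d d \<Longrightarrow> B \<in> carrier_mat d d \<Longrightarrow> (\<And>i j. i < d \<Longrightarrow> j < d \<Longrightarrow> A $$ (i,j) = B $$ (i,j)) \<Longrightarrow> A = B"
  by (rule eq_matI) auto

lemma herm_selfadj: assumes h: "hermitian_mat d B" shows "inr d (mv d B x) z = inr d x (mv d B z)"
proof -
  have "inr d (mv d B x) z = cnj (inr d z (mv d B x))" by (rule inr_swap)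
  also have "\<dots> = cnj (bf d B z x)" unfolding bf_eq_inr ..
  also have "\<dots> = bf d B x z" using bf_herm_swap[OF h, of x z] by simp
  finally show ?thesis unfolding bf_eq_inr .
qed

lemma psd_sqrt_unique:
  assumes pB: "psd d B" and pC: "psd d C" and BC: "B * B = C * C"
  shows "B = C"
proof -
  have hB: "hermitian_mat d B" and hC: "hermitian_mat d C" using pB pC unfolding psd_iff by auto
  then have B: "B \<in> carrier_mat d d" and C: "C \<in> carrier_mat d d" unfolding hermitian_mat_def by auto
  obtain u \<mu> where o: "orth d d u" and e: "\<forall>a<d. eigen d C (u a) (\<mu> a)" using spectral[OF hC] by blast
  have eB: "eigen d B (u b) (\<mu> b)" if b: "b < d" for b
  proof -
    define w where "w = u b"
    define m where "m = \<mu> b"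
    have m0: "m \<ge> 0" using psd_eig_nonneg[OF pC o _ b] e b unfolding m_def by auto
    have ew: "mv d C w i = complex_of_real m * w i" if "i < d" for i using e b that unfolding eigen_def w_def m_def by auto
    have BBw: "mv d B (mv d B w) i = complex_of_real (m^2) * w i" if i: "i < d" for i
    proof -
      have "mv d B (mv d B w) i = mv d (C * C) w i" using mv_mult[OF B B i] BC by simp
      also have "\<dots> = mv d C (mv d C w) i" by (rule mv_mult[OF C C i])
      also have "\<dots> = mv d C (\<lambda>j. complex_of_real m * w j) i" by (rule mv_cong, rule ew)
      also have "\<dots> = complex_of_real m * mv d C w i" unfolding mv_def by (simp add: sum_distrib_left mult_ac)
      also have "\<dots> = complex_of_real (m^2) * w i" using ew[OF i] by (simp add: power2_eq_square)
      finally show ?thesis .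
    qed
    define v where "v = (\<lambda>i. mv d B w i - complex_of_real m * w i)"
    have Bv: "mv d B v i = - complex_of_real m * v i" if i: "i < d" for i
      unfolding v_def mv_diff BBw[OF i] by (simp add: algebra_simps power2_eq_square)
    have "nrm2 d v = 0"
    proof (cases "m = 0")
      case False
      then have mp: "m > 0" using m0 by simp
      have "bf d B v v = inr d v (\<lambda>i. - complex_of_real m * v i)" unfolding bf_eq_inr using Bv by (intro inr_cong) auto
      also have "\<dots> = - complex_of_real m * complex_of_real (nrm2 d v)" unfolding inr_scale_right inr_self ..
      finally have "Re (bf d B v v) = - m * nrm2 d v" by simp
      then have "m * nrm2 d v \<le> 0" using pB unfolding psd_iff by (metis neg_0_le_iff_le mult_minus_left)
      then show ?thesis using mp nrm2_nonneg[of d v] by (simp add: mult_le_0_iff)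
    next
      case True
      have "complex_of_real (nrm2 d v) = inr d (mv d B w) (mv d B w)"
        unfolding inr_self[symmetric] v_def True by simp
      also have "\<dots> = inr d w (mv d B (mv d B w))" by (rule herm_selfadj[OF hB])
      also have "\<dots> = inr d w (\<lambda>_. 0)" using BBw True by (intro inr_cong) auto
      also have "\<dots> = 0" unfolding inr_def by simp
      finally show ?thesis by simp
    qed
    then have "\<forall>i<d. v i = 0" using nrm2_zero by blast
    then show ?thesis unfolding eigen_def v_def w_def m_def by simp
  qed
  show ?thesis
  proof (rule mat_eq_entries[OF B C])
    fix i j assume "i < d" "j < d"
    then show "B $$ (i,j) = C $$ (i,j)" using reconstruct[OF o _ \<open>i<d\<close> \<open>j<d\<close>, of B \<mu>] reconstruct[OF o e \<open>i<d\<close> \<open>j<d\<close>] eB by auto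
  qed
qed

lemma psd_sqrt_exists: assumes p: "psd d A" shows "\<exists>B. psd d B \<and> B * B = A"
proof -
  have h: "hermitian_mat d A" using p unfolding psd_iff by auto
  then have A: "A \<in> carrier_mat d d" unfolding hermitian_mat_def by auto
  obtain u lam where o: "orth d d u" and e: "\<forall>a<d. eigen d A (u a) (lam a)" using spectral[OF h] by blast
  have l0: "\<forall>a<d. lam a \<ge> 0" using psd_eig_nonneg[OF p o] e by auto
  define B where "B = gm d u (\<lambda>a. sqrt (lam a))"
  have pB: "psd d B" unfolding B_def using l0 by (intro gm_psd) simp
  have Bc: "B \<in> carrier_mat d d" unfolding B_def by (rule gm_carrier)
  have "B * B = A"
  proof (rule mat_eq_entries)
    show "B * B \<in> carrier_mat d d" using Bc by simp
    show "A \<in> carrier_mat d d" by (rule A)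
    have eBB: "\<forall>a<d. eigen d (B * B) (u a) (lam a)"
    proof (intro allI impI)
      fix a assume a: "a < d"
      have eb: "eigen d B (u a) (sqrt (lam a))" unfolding B_def by (rule gm_eigen[OF o a])
      show "eigen d (B * B) (u a) (lam a)" unfolding eigen_def
      proof (intro allI impI)
        fix i assume i: "i < d"
        have "mv d (B * B) (u a) i = mv d B (mv d B (u a)) i" by (rule mv_mult[OF Bc Bc i])
        also have "\<dots> = mv d B (\<lambda>j. complex_of_real (sqrt (lam a)) * u a j) i"
          using eb unfolding eigen_def by (intro mv_cong) auto
        also have "\<dots> = complex_of_real (sqrt (lam a)) * mv d B (u a) i" unfolding mv_def by (simp add: sum_distrib_left mult_ac)
        also have "\<dots> = complex_of_real (sqrt (lam a)) * (complex_of_real (sqrt (lam a)) * u a i)" using eb i unfolding eigen_def by simp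
        also have "\<dots> = complex_of_real (lam a) * u a i"
        proof -
          have "sqrt (lam a) * sqrt (lam a) = lam a" using l0 a by simp
          then show ?thesis by (metis mult.assoc of_real_mult)
        qed
        finally show "mv d (B * B) (u a) i = complex_of_real (lam a) * u a i" .
      qed
    qed
    fix i j assume "i < d" "j < d"
    then show "(B * B) $$ (i,j) = A $$ (i,j)" using reconstruct[OF o eBB] reconstruct[OF o e] by simp
  qed
  then show ?thesis using pB by blast
qed

lemma psd_sqrt_prop: assumes "psd d A" shows "psd d (psd_sqrt d A) \<and> psd_sqrt d A * psd_sqrt d A = A"
proof -
  obtain B where B: "psd d B" "B * B = A" using psd_sqrt_exists[OF assms] by blast
  have "\<exists>!B. psd d B \<and> B * B = A"
    using B psd_sqrt_unique by (intro ex1I[of _ B]) auto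
  then show ?thesis unfolding psd_sqrt_def by (rule theI')
qed

lemma psd_sqrt_eq: assumes "psd d B" "B * B = A" shows "psd_sqrt d A = B"
proof -
  have "\<exists>!B. psd d B \<and> B * B = A"
    using assms psd_sqrt_unique by (intro ex1I[of _ B]) auto
  then show ?thesis unfolding psd_sqrt_def using assms by (intro the1_equality) auto
qed

lemma psd_herm: "psd d A \<Longrightarrow> hermitian_mat d A" unfolding psd_iff by auto
lemma psd_carrier: "psd d A \<Longrightarrow> A \<in> carrier_mat d d" unfolding psd_iff hermitian_mat_def by auto
lemma herm_entry: "hermitian_mat d A \<Longrightarrow> i < d \<Longrightarrow> j < d \<Longrightarrow> A $$ (i,j) = cnj (A $$ (j,i))"
  unfolding herm_iff by blast

lemma fidelity_pure:
  assumes p: "psd d \<sigma>"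
  shows "fidelity d \<sigma> (proj d v) = Re (bf d \<sigma> (\<lambda>i. v $ i) (\<lambda>i. v $ i))"
proof -
  define S where "S = psd_sqrt d \<sigma>"
  have pS: "psd d S" and SS: "S * S = \<sigma>" using psd_sqrt_prop[OF p] unfolding S_def by auto
  have hS: "hermitian_mat d S" using pS by (rule psd_herm)
  have Sc: "S \<in> carrier_mat d d" using pS by (rule psd_carrier)
  define f where "f = (\<lambda>i. v $ i)"
  define w where "w = mv d S f"
  define P where "P = proj d v"
  have Pc: "P \<in> carrier_mat d d" unfolding P_def proj_def by auto
  have SPc: "S * P \<in> carrier_mat d d" using Sc Pc by simp
  have SP: "(S * P) $$ (i,k) = w i * cnj (f k)" if i: "i < d" and k: "k < d" for i k
  proof -
    have "(S * P) $$ (i,k) = (\<Sum>l<d. S $$ (i,l) * P $$ (l,k))" by (rule mult_index[OF Sc Pc i k])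
    also have "\<dots> = (\<Sum>l<d. S $$ (i,l) * f l * cnj (f k))" unfolding P_def proj_def f_def using k by (intro sum.cong) (auto simp: mult.assoc)
    also have "\<dots> = w i * cnj (f k)" unfolding w_def mv_def by (simp add: sum_distrib_right)
    finally show ?thesis .
  qed
  define Pw where "Pw = mat d d (\<lambda>(i,j). w i * cnj (w j))"
  have M: "S * P * S = Pw"
  proof (rule mat_eq_entries)
    show "S * P * S \<in> carrier_mat d d" using SPc Sc by simp
    show "Pw \<in> carrier_mat d d" unfolding Pw_def by simp
    fix i j assume i: "i < d" and j: "j < d"
    have "(S * P * S) $$ (i,j) = (\<Sum>k<d. (S * P) $$ (i,k) * S $$ (k,j))" by (rule mult_index[OF SPc Sc i j])
    also have "\<dots> = (\<Sum>k<d. w i * (cnj (f k) * cnj (S $$ (j,k))))"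
      using SP i herm_entry[OF hS _ j] by (intro sum.cong) (auto simp: mult.assoc)
    also have "\<dots> = w i * cnj (w j)" unfolding w_def mv_def by (simp add: sum_distrib_left mult.commute)
    finally show "(S * P * S) $$ (i,j) = Pw $$ (i,j)" unfolding Pw_def using i j by simp
  qed
  define n where "n = nrm2 d w"
  have n0: "n \<ge> 0" unfolding n_def by (rule nrm2_nonneg)
  define c where "c = 1 / sqrt n"
  define B where "B = mat d d (\<lambda>(i,j). complex_of_real c * (w i * cnj (w j)))"
  have Bc: "B \<in> carrier_mat d d" unfolding B_def by simp
  have pB: "psd d B" unfolding psd_iff
  proof (intro conjI allI)
    show "hermitian_mat d B" unfolding herm_iff B_def by (auto simp: mult_ac)
    fix x
    have "bf d B x x = (\<Sum>i<d. \<Sum>j<d. complex_of_real c * ((cnj (x i) * w i) * (cnj (w j) * x j)))"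
      unfolding bf_def B_def by (intro sum.cong refl) (auto simp: mult_ac)
    also have "\<dots> = complex_of_real c * (\<Sum>i<d. \<Sum>j<d. (cnj (x i) * w i) * (cnj (w j) * x j))"
      by (simp add: sum_distrib_left)
    also have "\<dots> = complex_of_real c * (inr d x w * inr d w x)"
      unfolding inr_def sum_product ..
    also have "\<dots> = complex_of_real c * complex_of_real ((cmod (inr d w x))^2)"
      using inr_swap[of d x w] cnj_mult_self by simp
    finally show "0 \<le> Re (bf d B x x)" unfolding c_def using n0 by simp
  qed
  have BB: "B * B = Pw"
  proof (rule mat_eq_entries)
    show "B * B \<in> carrier_mat d d" using Bc by simp
    show "Pw \<in> carrier_mat d d" unfolding Pw_def by simp
    fix i j assume i: "i < d" and j: "j < d"
    have "(B * B) $$ (i,j) = (\<Sum>l<d. B $$ (i,l) * B $$ (l,j))" by (rule mult_index[OF Bc Bc i j])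
    also have "\<dots> = (\<Sum>l<d. complex_of_real (c * c) * (w i * cnj (w j)) * (cnj (w l) * w l))"
      unfolding B_def using i j by (intro sum.cong) (auto simp: mult_ac)
    also have "\<dots> = complex_of_real (c * c * n) * (w i * cnj (w j))"
      unfolding n_def nrm2_eq[symmetric] sum_distrib_left[symmetric] by (simp add: mult_ac)
    also have "\<dots> = w i * cnj (w j)"
    proof (cases "n = 0")
      case True
      then have "w i = 0" using nrm2_zero i unfolding n_def by blast
      then show ?thesis by simp
    next
      case False
      then have "n > 0" using nrm2_nonneg[of d w] unfolding n_def by linarith
      then have "c * c * n = 1" unfolding c_def by simp
      then show ?thesis by simp
    qed
    finally show "(B * B) $$ (i,j) = Pw $$ (i,j)" unfolding Pw_def using i j by simp
  qed
  have sq: "psd_sqrt d (S * P * S) = B" unfolding M by (rule psd_sqrt_eq[OF pB BB])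
  have tr: "mtrace B = complex_of_real (c * n)"
  proof -
    have "mtrace B = (\<Sum>i<d. complex_of_real c * (w i * cnj (w i)))" unfolding mtrace_def B_def by simp
    also have "\<dots> = complex_of_real c * (\<Sum>i<d. cnj (w i) * w i)" by (simp add: sum_distrib_left mult_ac)
    also have "\<dots> = complex_of_real (c * n)" unfolding n_def nrm2_eq[symmetric] by simp
    finally show ?thesis .
  qed
  have fid: "fidelity d \<sigma> (proj d v) = (c * n)^2"
    unfolding fidelity_def S_def[symmetric] P_def[symmetric] sq tr by simp
  have "(c * n)^2 = n"
  proof (cases "n = 0")
    case True then show ?thesis by simp
  next
    case False
    then have "n > 0" using nrm2_nonneg[of d w] unfolding n_def by linarith
    then show ?thesis unfolding c_def by (simp add: power2_eq_square)
  qed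
  moreover have "complex_of_real n = bf d \<sigma> f f"
  proof -
    have "complex_of_real n = inr d (mv d S f) (mv d S f)" unfolding n_def w_def inr_self ..
    also have "\<dots> = inr d f (mv d S (mv d S f))" by (rule herm_selfadj[OF hS])
    also have "\<dots> = inr d f (mv d \<sigma> f)" unfolding SS[symmetric] using mv_mult[OF Sc Sc] by (intro inr_cong) auto
    also have "\<dots> = bf d \<sigma> f f" unfolding bf_eq_inr ..
    finally show ?thesis .
  qed
  ultimately show ?thesis unfolding fid f_def by (metis Re_complex_of_real)
qed

definition ev :: "nat \<Rightarrow> nat \<Rightarrow> complex" where "ev a = (\<lambda>l. if l = a then 1 else 0)"

lemma bf_unit: "a < d \<Longrightarrow> b < d \<Longrightarrow> bf d M (ev a) (ev b) = M $$ (a,b)"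
proof -
  assume a: "a < d" and b: "b < d"
  have "bf d M (ev a) (ev b) = (\<Sum>i<d. cnj (ev a i) * mv d M (ev b) i)" by (rule bf_mv)
  also have "\<dots> = (\<Sum>i<d. mv d M (ev b) i * (if i = a then 1 else 0))" unfolding ev_def by (intro sum.cong) auto
  also have "\<dots> = mv d M (ev b) a" unfolding sum_delta_mult using a by simp
  also have "\<dots> = M $$ (a,b)" unfolding mv_def ev_def sum_delta_mult using b by simp
  finally show ?thesis .
qed

lemma psd_diag: assumes "psd d M" "i < d" shows "0 \<le> Re (M $$ (i,i))" "Im (M $$ (i,i)) = 0"
proof -
  show "0 \<le> Re (M $$ (i,i))" using assms bf_unit[of i d i M] unfolding psd_iff by metis
  have "M $$ (i,i) = cnj (M $$ (i,i))" using herm_entry[OF psd_herm[OF assms(1)] assms(2) assms(2)] .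
  then show "Im (M $$ (i,i)) = 0" by (metis Reals_cnj_iff complex_is_Real_iff)
qed

lemma psd_pair:
  assumes p: "psd d M" and i: "i < d" and j: "j < d" and ij: "i \<noteq> j"
  shows "0 \<le> Re (M $$ (i,i)) - 2 * t * (cmod (M $$ (i,j)))^2 + t^2 * (cmod (M $$ (i,j)))^2 * Re (M $$ (j,j))"
proof -
  have h: "hermitian_mat d M" using p by (rule psd_herm)
  define m where "m = M $$ (i,j)"
  have mji: "M $$ (j,i) = cnj m" unfolding m_def using herm_entry[OF h j i] .
  define \<beta> where "\<beta> = - complex_of_real t * cnj m"
  define x where "x = (\<lambda>l. ev i l + \<beta> * ev j l)"
  have "bf d M x x = bf d M (ev i) (ev i) + \<beta> * bf d M (ev i) (ev j) + cnj \<beta> * bf d M (ev j) (ev i) + cnj \<beta> * \<beta> * bf d M (ev j) (ev j)"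
    unfolding x_def bf_add_left bf_add_right bf_scale_left bf_scale_right by (simp add: algebra_simps)
  also have "\<dots> = M $$ (i,i) + \<beta> * m + cnj \<beta> * cnj m + cnj \<beta> * \<beta> * M $$ (j,j)"
    using bf_unit i j mji unfolding m_def by simp
  also have "\<dots> = M $$ (i,i) - 2 * complex_of_real t * (cnj m * m) + complex_of_real (t^2) * (cnj m * m) * M $$ (j,j)"
    unfolding \<beta>_def by (simp add: algebra_simps power2_eq_square)
  finally have "Re (bf d M x x) = Re (M $$ (i,i)) - 2 * t * (cmod m)^2 + t^2 * (cmod m)^2 * Re (M $$ (j,j))"
    unfolding cnj_mult_self by simp
  then show ?thesis using p unfolding psd_iff m_def by metis
qed

lemma psd_offdiag_zero:
  assumes p: "psd d M" and i: "i < d" and j: "j < d" and z: "Re (M $$ (i,i)) = 0"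
  shows "M $$ (i,j) = 0"
proof (cases "i = j")
  case True
  then show ?thesis using z psd_diag(2)[OF p i] by (simp add: complex_eq_iff)
next
  case False
  have "0 \<le> - ((cmod (M $$ (i,j)))^2)"
  proof (rule quad_nonneg_imp)
    fix t :: real assume "t > 0"
    show "0 \<le> 2 * t * - (cmod (M $$ (i,j)))\<^sup>2 + t\<^sup>2 * ((cmod (M $$ (i,j)))^2 * Re (M $$ (j,j)))"
      using psd_pair[OF p i j False, of t] z by (simp add: algebra_simps)
  qed
  then show ?thesis by simp
qed

definition corr :: "nat \<Rightarrow> complex mat \<Rightarrow> bool" where
  "corr d X \<longleftrightarrow> psd d X \<and> (\<forall>i<d. X $$ (i,i) = 1)"

definition obj :: "nat \<Rightarrow> complex mat \<Rightarrow> complex mat \<Rightarrow> real" where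
  "obj d \<rho> X = Re (\<Sum>i<d. \<Sum>j<d. \<rho> $$ (i,j) * X $$ (i,j))"

lemma bf_mat: "bf d (mat d d y) v w = (\<Sum>i<d. \<Sum>j<d. cnj (v i) * y (i,j) * w j)"
  unfolding bf_def by (intro sum.cong refl) auto

lemma obj_mat: "obj d \<rho> (mat d d y) = Re (\<Sum>i<d. \<Sum>j<d. \<rho> $$ (i,j) * y (i,j))"
  unfolding obj_def by (intro arg_cong[where f=Re] sum.cong refl) auto

lemma corr_bound: assumes c: "corr d X" and i: "i < d" and j: "j < d" shows "cmod (X $$ (i,j)) \<le> 1"
proof (cases "i = j")
  case True then show ?thesis using c i unfolding corr_def by simp
next
  case False
  have p: "psd d X" and d1: "X $$ (i,i) = 1" "X $$ (j,j) = 1" using c i j unfolding corr_def by auto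
  have "0 \<le> 1 - 2 * 1 * (cmod (X $$ (i,j)))^2 + 1^2 * (cmod (X $$ (i,j)))^2 * 1"
    using psd_pair[OF p i j False, of 1] d1 by simp
  then have "(cmod (X $$ (i,j)))^2 \<le> 1^2" by simp
  then show ?thesis by (rule power2_le_imp_le) simp
qed

lemma corr_one: "corr d (mat d d (\<lambda>(i,j). if i = j then 1 else 0))"
  unfolding corr_def psd_iff
proof (intro conjI allI impI)
  show "hermitian_mat d (mat d d (\<lambda>(i,j). if i = j then 1 else 0))" unfolding herm_iff by auto
  fix x
  have "bf d (mat d d (\<lambda>(i,j). if i = j then 1 else 0)) x x = (\<Sum>i<d. \<Sum>j<d. (cnj (x i) * x j) * (if j = i then 1 else 0))"
    unfolding bf_mat by (intro sum.cong refl) auto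
  also have "\<dots> = inr d x x" unfolding sum_delta_mult inr_def by simp
  finally show "0 \<le> Re (bf d (mat d d (\<lambda>(i,j). if i = j then 1 else 0)) x x)" unfolding inr_self using nrm2_nonneg by simp
qed simp

lemma corr_max: "\<exists>X. corr d X \<and> (\<forall>Y. corr d Y \<longrightarrow> obj d \<rho> Y \<le> obj d \<rho> X)"
proof -
  define I where "I = {..<d} \<times> {..<d}"
  define S where "S = {x. corr d (mat d d x)}"
  define F where "F x = obj d \<rho> (mat d d x)" for x
  have fin: "finite I" unfolding I_def by simp
  have x0: "(\<lambda>(i,j). if i = j then 1 else 0) \<in> S" unfolding S_def using corr_one by simp
  have bnd: "norm (x p) \<le> 1" if xS: "x \<in> S" and pI: "p \<in> I" for x p
  proof -
    obtain i j where p: "p = (i,j)" "i < d" "j < d" using pI unfolding I_def by auto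
    have "cmod (mat d d x $$ (i,j)) \<le> 1" using corr_bound xS p unfolding S_def by blast
    then show ?thesis using p by simp
  qed
  have clo: "g \<in> S" if xs: "\<And>n. x n \<in> S" and xg: "\<And>p. p \<in> I \<Longrightarrow> (\<lambda>n. x n p) \<longlonglongrightarrow> g p" for x g
  proof -
    have xg': "(\<lambda>n. x n (i,j)) \<longlonglongrightarrow> g (i,j)" if "i < d" "j < d" for i j using xg that unfolding I_def by auto
    have cx: "corr d (mat d d (x n))" for n using xs unfolding S_def by auto
    have herm: "g (i,j) = cnj (g (j,i))" if ij: "i < d" "j < d" for i j
    proof -
      have "x n (i,j) = cnj (x n (j,i))" for n
        using herm_entry[OF psd_herm[of d "mat d d (x n)"] ij] cx[of n] ij unfolding corr_def by simp
      then have "(\<lambda>n. x n (i,j)) \<longlonglongrightarrow> cnj (g (j,i))" using tendsto_cnj[OF xg'[of j i]] ij by simp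
      then show ?thesis using xg'[OF ij] LIMSEQ_unique by blast
    qed
    have form: "0 \<le> Re (bf d (mat d d g) v v)" for v
    proof -
      have "(\<lambda>n. Re (bf d (mat d d (x n)) v v)) \<longlonglongrightarrow> Re (bf d (mat d d g) v v)"
        unfolding bf_mat by (intro tendsto_Re tendsto_sum tendsto_mult tendsto_const xg') auto
      moreover have "0 \<le> Re (bf d (mat d d (x n)) v v)" for n using cx[of n] unfolding corr_def psd_iff by auto
      ultimately show ?thesis by (intro LIMSEQ_le_const) auto
    qed
    have diag: "g (i,i) = 1" if i: "i < d" for i
    proof -
      have "x n (i,i) = 1" for n using cx[of n] i unfolding corr_def by auto
      then have "(\<lambda>n. 1) \<longlonglongrightarrow> g (i,i)" using xg'[OF i i] by simp
      then show ?thesis using LIMSEQ_const_iff by metis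
    qed
    have "hermitian_mat d (mat d d g)" unfolding herm_iff
    proof (intro conjI allI impI)
      fix i j assume "i < d" "j < d"
      then show "mat d d g $$ (i, j) = cnj (mat d d g $$ (j, i))" using herm[of i j] by simp
    qed simp
    then have "corr d (mat d d g)" unfolding corr_def psd_iff using form diag by simp
    then show ?thesis unfolding S_def by simp
  qed
  have cont: "(\<lambda>n. F (x n)) \<longlonglongrightarrow> F g" if "\<And>n. x n \<in> S" and xg: "\<And>p. p \<in> I \<Longrightarrow> (\<lambda>n. x n p) \<longlonglongrightarrow> g p" for x g
  proof -
    have xg': "(\<lambda>n. x n (i,j)) \<longlonglongrightarrow> g (i,j)" if "i < d" "j < d" for i j using xg that unfolding I_def by auto
    show ?thesis unfolding F_def obj_mat by (intro tendsto_Re tendsto_sum tendsto_mult tendsto_const xg') auto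
  qed
  obtain x where xS: "x \<in> S" and xm: "\<forall>y\<in>S. F y \<le> F x"
    using attains_max[OF fin x0, of 1 F] bnd clo cont by blast
  show ?thesis
  proof (intro exI conjI allI impI)
    show "corr d (mat d d x)" using xS unfolding S_def by simp
    fix Y assume Y: "corr d Y"
    then have Yc: "Y \<in> carrier_mat d d" unfolding corr_def by (simp add: psd_carrier)
    have "Y = mat d d (\<lambda>(i,j). Y $$ (i,j))" using Yc by (intro mat_eq_entries) auto
    then have "(\<lambda>(i,j). Y $$ (i,j)) \<in> S" unfolding S_def using Y by simp
    then have "F (\<lambda>(i,j). Y $$ (i,j)) \<le> F x" using xm by blast
    then show "obj d \<rho> Y \<le> obj d \<rho> (mat d d x)" unfolding F_def using \<open>Y = _\<close> by simp
  qed
qed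

lemma second_order:
  assumes h: "hermitian_mat d \<rho>" and cX: "corr d X" and mx: "\<forall>Y. corr d Y \<longrightarrow> obj d \<rho> Y \<le> obj d \<rho> X"
  shows "Re (bf d \<rho> u u) \<le> (\<Sum>i<d. Re (\<Sum>j<d. \<rho> $$ (i,j) * X $$ (i,j)) * (cmod (u i))^2)"
proof -
  have pX: "psd d X" and dX: "\<And>i. i < d \<Longrightarrow> X $$ (i,i) = 1" using cX unfolding corr_def by auto
  have hX: "hermitian_mat d X" using pX by (rule psd_herm)
  define \<alpha> where "\<alpha> i = (cmod (u i))^2" for i
  define r where "r i j = Re (\<rho> $$ (i,j) * X $$ (i,j))" for i j
  define L where "L = 1 + (\<Sum>i<d. \<alpha> i)"
  have \<alpha>0: "\<alpha> i \<ge> 0" for i unfolding \<alpha>_def by simp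
  have \<alpha>L: "\<alpha> i \<le> L" if "i < d" for i
  proof -
    have "\<alpha> i \<le> (\<Sum>i<d. \<alpha> i)" using that \<alpha>0 by (intro member_le_sum) auto
    then show ?thesis unfolding L_def by simp
  qed
  have L1: "L \<ge> 1" unfolding L_def using \<alpha>0 by (simp add: sum_nonneg)
  define a where "a s i = sqrt (1 - s * \<alpha> i)" for s i
  define Xs where "Xs s = mat d d (\<lambda>(i,j). complex_of_real (a s i * a s j) * X $$ (i,j) + complex_of_real s * (cnj (u i) * u j))" for s
  have key: "s * Re (bf d \<rho> u u) \<le> (\<Sum>i<d. \<Sum>j<d. r i j * (1 - a s i * a s j))"
    if s0: "0 < s" and s1: "\<forall>i<d. s * \<alpha> i \<le> 1" for s
  proof -
    have aa: "a s i * a s i = 1 - s * \<alpha> i" if "i < d" for i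
      unfolding a_def using s1 that by simp
    have herm: "hermitian_mat d (Xs s)" unfolding herm_iff
    proof (intro conjI allI impI)
      show "Xs s \<in> carrier_mat d d" unfolding Xs_def by simp
      fix i j assume i: "i < d" and j: "j < d"
      have "X $$ (i,j) = cnj (X $$ (j,i))" by (rule herm_entry[OF hX i j])
      then show "Xs s $$ (i,j) = cnj (Xs s $$ (j,i))" unfolding Xs_def using i j by (simp add: mult_ac)
    qed
    have form: "0 \<le> Re (bf d (Xs s) v v)" for v
    proof -
      define z where "z = (\<Sum>j<d. u j * v j)"
      define av where "av = (\<lambda>i. complex_of_real (a s i) * v i)"
      have "bf d (Xs s) v v = (\<Sum>i<d. \<Sum>j<d. cnj (av i) * X $$ (i,j) * av j + complex_of_real s * ((cnj (v i) * cnj (u i)) * (u j * v j)))"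
        unfolding Xs_def bf_mat av_def by (intro sum.cong refl) (simp add: algebra_simps)
      also have "\<dots> = bf d X av av + (\<Sum>i<d. \<Sum>j<d. complex_of_real s * ((cnj (v i) * cnj (u i)) * (u j * v j)))"
        unfolding bf_def by (simp add: sum.distrib)
      also have "(\<Sum>i<d. \<Sum>j<d. complex_of_real s * ((cnj (v i) * cnj (u i)) * (u j * v j))) = complex_of_real s * (cnj z * z)"
      proof -
        have "cnj z = (\<Sum>i<d. cnj (v i) * cnj (u i))" unfolding z_def by (simp add: mult.commute)
        then have "complex_of_real s * (cnj z * z) = complex_of_real s * ((\<Sum>i<d. cnj (v i) * cnj (u i)) * (\<Sum>j<d. u j * v j))"
          unfolding z_def by simp
        also have "\<dots> = complex_of_real s * (\<Sum>i<d. \<Sum>j<d. (cnj (v i) * cnj (u i)) * (u j * v j))"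
          by (simp only: sum_product)
        also have "\<dots> = (\<Sum>i<d. \<Sum>j<d. complex_of_real s * ((cnj (v i) * cnj (u i)) * (u j * v j)))"
          by (simp only: sum_distrib_left)
        finally show ?thesis by simp
      qed
      finally have "Re (bf d (Xs s) v v) = Re (bf d X av av) + s * (cmod z)^2"
        by (simp add: cnj_mult_self)
      moreover have "0 \<le> Re (bf d X av av)" using pX unfolding psd_iff by auto
      ultimately show ?thesis using s0 by simp
    qed
    have diag: "Xs s $$ (i,i) = 1" if i: "i < d" for i
    proof -
      have "Xs s $$ (i,i) = complex_of_real (a s i * a s i) * 1 + complex_of_real s * complex_of_real (\<alpha> i)"
        unfolding Xs_def using i dX[OF i] by (simp add: cnj_mult_self \<alpha>_def)
      also have "\<dots> = 1" unfolding aa[OF i] by (simp add: algebra_simps)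
      finally show ?thesis .
    qed
    have "corr d (Xs s)" unfolding corr_def psd_iff using herm form diag by simp
    then have le: "obj d \<rho> (Xs s) \<le> obj d \<rho> X" using mx by blast
    have "obj d \<rho> (Xs s) = Re (\<Sum>i<d. \<Sum>j<d. complex_of_real (a s i * a s j) * (\<rho> $$ (i,j) * X $$ (i,j)) + complex_of_real s * (cnj (u i) * \<rho> $$ (i,j) * u j))"
      unfolding Xs_def obj_mat by (intro arg_cong[where f=Re] sum.cong refl) (simp add: algebra_simps)
    also have "\<dots> = (\<Sum>i<d. \<Sum>j<d. a s i * a s j * r i j) + s * Re (bf d \<rho> u u)"
      unfolding bf_def r_def by (simp add: sum.distrib Re_sum sum_distrib_left)
    finally have "obj d \<rho> (Xs s) = (\<Sum>i<d. \<Sum>j<d. a s i * a s j * r i j) + s * Re (bf d \<rho> u u)" .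
    moreover have "obj d \<rho> X = (\<Sum>i<d. \<Sum>j<d. r i j)" unfolding obj_def r_def by (simp add: Re_sum)
    moreover have "(\<Sum>i<d. \<Sum>j<d. r i j * (1 - a s i * a s j)) = (\<Sum>i<d. \<Sum>j<d. r i j) - (\<Sum>i<d. \<Sum>j<d. a s i * a s j * r i j)"
      by (simp add: sum_subtractf algebra_simps)
    ultimately show ?thesis using le by linarith
  qed
  define s where "s n = 1 / (L * (real n + 1))" for n
  have sp: "s n > 0" for n unfolding s_def using L1 by simp
  have s1: "\<forall>i<d. s n * \<alpha> i \<le> 1" for n
  proof (intro allI impI)
    fix i assume i: "i < d"
    have "s n * \<alpha> i \<le> s n * L" using \<alpha>L[OF i] sp[of n] by (simp add: mult_left_mono)
    also have "\<dots> = 1 / (real n + 1)" unfolding s_def using L1 by simp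
    also have "\<dots> \<le> 1" by simp
    finally show "s n * \<alpha> i \<le> 1" .
  qed
  define hh where "hh n i j = (\<alpha> i + \<alpha> j - s n * \<alpha> i * \<alpha> j) / (1 + a (s n) i * a (s n) j)" for n i j
  have eq: "1 - a (s n) i * a (s n) j = s n * hh n i j" if i: "i < d" and j: "j < d" for n i j
  proof -
    have ai: "a (s n) i * a (s n) i = 1 - s n * \<alpha> i" unfolding a_def using s1[of n] i by simp
    have aj: "a (s n) j * a (s n) j = 1 - s n * \<alpha> j" unfolding a_def using s1[of n] j by simp
    have "0 \<le> a (s n) i" "0 \<le> a (s n) j" unfolding a_def using s1[of n] i j by auto
    then have pos: "1 + a (s n) i * a (s n) j > 0" by (simp add: add_pos_nonneg)
    have "(1 - a (s n) i * a (s n) j) * (1 + a (s n) i * a (s n) j) = 1 - (a (s n) i * a (s n) i) * (a (s n) j * a (s n) j)"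
      by (simp add: algebra_simps)
    also have "\<dots> = s n * (\<alpha> i + \<alpha> j - s n * \<alpha> i * \<alpha> j)" unfolding ai aj by (simp add: algebra_simps)
    finally show ?thesis unfolding hh_def using pos by (simp add: field_simps)
  qed
  have le: "Re (bf d \<rho> u u) \<le> (\<Sum>i<d. \<Sum>j<d. r i j * hh n i j)" for n
  proof -
    have "s n * Re (bf d \<rho> u u) \<le> (\<Sum>i<d. \<Sum>j<d. r i j * (1 - a (s n) i * a (s n) j))" by (rule key[OF sp s1])
    also have "\<dots> = s n * (\<Sum>i<d. \<Sum>j<d. r i j * hh n i j)"
      unfolding sum_distrib_left by (intro sum.cong refl) (simp add: eq mult_ac)
    finally show ?thesis using sp[of n] by simp
  qed
  have s0: "s \<longlonglongrightarrow> 0"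
  proof -
    have l1: "(\<lambda>n. 1 / (real n + 1)) \<longlonglongrightarrow> 0"
      using LIMSEQ_inverse_real_of_nat by (simp add: inverse_eq_divide add.commute)
    have "(\<lambda>n. (1 / L) * (1 / (real n + 1))) \<longlonglongrightarrow> (1 / L) * 0" by (intro tendsto_mult tendsto_const l1)
    moreover have "s = (\<lambda>n. (1 / L) * (1 / (real n + 1)))" unfolding s_def by auto
    ultimately show ?thesis by simp
  qed
  have al: "(\<lambda>n. a (s n) i) \<longlonglongrightarrow> 1" for i
  proof -
    have "(\<lambda>n. sqrt (1 - s n * \<alpha> i)) \<longlonglongrightarrow> sqrt (1 - 0 * \<alpha> i)"
      by (intro tendsto_real_sqrt tendsto_diff tendsto_const tendsto_mult s0)
    then show ?thesis unfolding a_def by simp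
  qed
  have hl: "(\<lambda>n. hh n i j) \<longlonglongrightarrow> (\<alpha> i + \<alpha> j) / 2" for i j
  proof -
    have "(\<lambda>n. (\<alpha> i + \<alpha> j - s n * \<alpha> i * \<alpha> j) / (1 + a (s n) i * a (s n) j)) \<longlonglongrightarrow> (\<alpha> i + \<alpha> j - 0 * \<alpha> i * \<alpha> j) / (1 + 1 * 1)"
      by (intro tendsto_divide tendsto_add tendsto_diff tendsto_mult tendsto_const s0 al) simp
    then show ?thesis unfolding hh_def by simp
  qed
  have lim: "(\<lambda>n. \<Sum>i<d. \<Sum>j<d. r i j * hh n i j) \<longlonglongrightarrow> (\<Sum>i<d. \<Sum>j<d. r i j * ((\<alpha> i + \<alpha> j) / 2))"
    by (intro tendsto_sum tendsto_mult tendsto_const hl)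
  have main: "Re (bf d \<rho> u u) \<le> (\<Sum>i<d. \<Sum>j<d. r i j * ((\<alpha> i + \<alpha> j) / 2))"
    using le by (intro LIMSEQ_le_const[OF lim]) auto
  have rs: "r i j = r j i" if "i < d" "j < d" for i j
  proof -
    have "\<rho> $$ (i,j) * X $$ (i,j) = cnj (\<rho> $$ (j,i) * X $$ (j,i))"
      using herm_entry[OF h that] herm_entry[OF hX that] by simp
    then show ?thesis unfolding r_def by simp
  qed
  have "(\<Sum>i<d. \<Sum>j<d. r i j * ((\<alpha> i + \<alpha> j) / 2)) = (\<Sum>i<d. \<Sum>j<d. r i j * \<alpha> i) / 2 + (\<Sum>i<d. \<Sum>j<d. r i j * \<alpha> j) / 2"
    by (simp add: sum.distrib sum_divide_distrib algebra_simps add_divide_distrib)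
  also have "(\<Sum>i<d. \<Sum>j<d. r i j * \<alpha> j) = (\<Sum>j<d. \<Sum>i<d. r i j * \<alpha> j)" by (rule sum.swap)
  also have "\<dots> = (\<Sum>j<d. \<Sum>i<d. r j i * \<alpha> j)" using rs by (intro sum.cong refl) auto
  also have "(\<Sum>i<d. \<Sum>j<d. r i j * \<alpha> i) / 2 + (\<Sum>j<d. \<Sum>i<d. r j i * \<alpha> j) / 2 = (\<Sum>i<d. \<Sum>j<d. r i j * \<alpha> i)" by simp
  also have "\<dots> = (\<Sum>i<d. Re (\<Sum>j<d. \<rho> $$ (i,j) * X $$ (i,j)) * (cmod (u i))^2)"
    unfolding r_def \<alpha>_def by (simp add: Re_sum sum_distrib_right)
  finally show ?thesis using main by simp
qed

lemma gram_psd: "psd d (mat d d (\<lambda>(i,j). \<Sum>k<n. g k i * cnj (g k j)))"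
  unfolding psd_iff
proof (intro conjI allI)
  show "hermitian_mat d (mat d d (\<lambda>(i,j). \<Sum>k<n. g k i * cnj (g k j)))" unfolding herm_iff by (auto simp: mult.commute)
  fix v
  define w where "w k = (\<Sum>i<d. cnj (v i) * g k i)" for k
  have "bf d (mat d d (\<lambda>(i,j). \<Sum>k<n. g k i * cnj (g k j))) v v = (\<Sum>i<d. \<Sum>j<d. \<Sum>k<n. (cnj (v i) * g k i) * (cnj (g k j) * v j))"
    unfolding bf_mat by (intro sum.cong refl) (simp add: sum_distrib_left sum_distrib_right mult_ac)
  also have "\<dots> = (\<Sum>k<n. \<Sum>i<d. \<Sum>j<d. (cnj (v i) * g k i) * (cnj (g k j) * v j))"
    by (subst sum.swap, subst (2) sum.swap, rule refl)
  also have "\<dots> = (\<Sum>k<n. w k * cnj (w k))"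
  proof -
    have cw: "cnj (w k) = (\<Sum>j<d. cnj (g k j) * v j)" for k unfolding w_def by (simp add: mult.commute)
    show ?thesis unfolding cw unfolding w_def sum_product ..
  qed
  also have "\<dots> = complex_of_real (\<Sum>k<n. (cmod (w k))^2)"
    by (simp only: of_real_sum complex_norm_square)
  finally show "0 \<le> Re (bf d (mat d d (\<lambda>(i,j). \<Sum>k<n. g k i * cnj (g k j))) v v)" by (simp add: sum_nonneg)
qed

lemma schur_psd:
  assumes p: "psd d \<rho>"
  shows "psd d (mat d d (\<lambda>(i,j). \<rho> $$ (i,j) * (\<Sum>k<n. g k i * cnj (g k j))))"
  unfolding psd_iff
proof (intro conjI allI)
  have h: "hermitian_mat d \<rho>" using p by (rule psd_herm)
  show "hermitian_mat d (mat d d (\<lambda>(i,j). \<rho> $$ (i,j) * (\<Sum>k<n. g k i * cnj (g k j))))"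
    unfolding herm_iff
  proof (intro conjI allI impI)
    fix i j assume i: "i < d" and j: "j < d"
    have "\<rho> $$ (i,j) = cnj (\<rho> $$ (j,i))" by (rule herm_entry[OF h i j])
    then show "mat d d (\<lambda>(i,j). \<rho> $$ (i,j) * (\<Sum>k<n. g k i * cnj (g k j))) $$ (i,j) =
      cnj (mat d d (\<lambda>(i,j). \<rho> $$ (i,j) * (\<Sum>k<n. g k i * cnj (g k j))) $$ (j,i))"
      using i j by (simp add: mult.commute)
  qed simp
  fix v
  have "bf d (mat d d (\<lambda>(i,j). \<rho> $$ (i,j) * (\<Sum>k<n. g k i * cnj (g k j)))) v v
     = (\<Sum>i<d. \<Sum>j<d. \<Sum>k<n. cnj (cnj (g k i) * v i) * \<rho> $$ (i,j) * (cnj (g k j) * v j))"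
    unfolding bf_mat by (intro sum.cong refl) (simp add: sum_distrib_left sum_distrib_right mult_ac)
  also have "\<dots> = (\<Sum>k<n. \<Sum>i<d. \<Sum>j<d. cnj (cnj (g k i) * v i) * \<rho> $$ (i,j) * (cnj (g k j) * v j))"
    by (subst sum.swap, subst (2) sum.swap, rule refl)
  also have "\<dots> = (\<Sum>k<n. bf d \<rho> (\<lambda>i. cnj (g k i) * v i) (\<lambda>i. cnj (g k i) * v i))"
    unfolding bf_def ..
  finally show "0 \<le> Re (bf d (mat d d (\<lambda>(i,j). \<rho> $$ (i,j) * (\<Sum>k<n. g k i * cnj (g k j)))) v v)"
    using p unfolding psd_iff by (simp add: Re_sum sum_nonneg)
qed

lemma diag_conj:
  assumes K: "K \<in> carrier_mat d d" and Kd: "\<And>i j. i < d \<Longrightarrow> j < d \<Longrightarrow> i \<noteq> j \<Longrightarrow> K $$ (i,j) = 0"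
    and S: "\<sigma> \<in> carrier_mat d d" and i: "i < d" and j: "j < d"
  shows "(K * \<sigma> * adj K) $$ (i,j) = K $$ (i,i) * \<sigma> $$ (i,j) * cnj (K $$ (j,j))"
proof -
  have KS: "K * \<sigma> \<in> carrier_mat d d" using K S by simp
  have aK: "adj K \<in> carrier_mat d d" by (rule adj_carrier[OF K])
  have ks: "(K * \<sigma>) $$ (i,l) = K $$ (i,i) * \<sigma> $$ (i,l)" if l: "l < d" for l
  proof -
    have "(K * \<sigma>) $$ (i,l) = (\<Sum>m<d. K $$ (i,m) * \<sigma> $$ (m,l))" by (rule mult_index[OF K S i l])
    also have "\<dots> = (\<Sum>m<d. (K $$ (i,i) * \<sigma> $$ (m,l)) * (if m = i then 1 else 0))"
      using Kd i by (intro sum.cong refl) auto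
    also have "\<dots> = K $$ (i,i) * \<sigma> $$ (i,l)" unfolding sum_delta_mult using i by simp
    finally show ?thesis .
  qed
  have "(K * \<sigma> * adj K) $$ (i,j) = (\<Sum>l<d. (K * \<sigma>) $$ (i,l) * adj K $$ (l,j))" by (rule mult_index[OF KS aK i j])
  also have "\<dots> = (\<Sum>l<d. (K $$ (i,i) * \<sigma> $$ (i,l) * cnj (K $$ (j,j))) * (if l = j then 1 else 0))"
    using ks Kd adj_index[OF K _ j] j by (intro sum.cong refl) auto
  also have "\<dots> = K $$ (i,i) * \<sigma> $$ (i,j) * cnj (K $$ (j,j))" unfolding sum_delta_mult using j by simp
  finally show ?thesis .
qed

lemma adjK_K:
  assumes K: "K \<in> carrier_mat d d" and Kd: "\<And>i j. i < d \<Longrightarrow> j < d \<Longrightarrow> i \<noteq> j \<Longrightarrow> K $$ (i,j) = 0"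
    and i: "i < d"
  shows "(adj K * K) $$ (i,i) = cnj (K $$ (i,i)) * K $$ (i,i)"
proof -
  have aK: "adj K \<in> carrier_mat d d" by (rule adj_carrier[OF K])
  have "(adj K * K) $$ (i,i) = (\<Sum>l<d. adj K $$ (i,l) * K $$ (l,i))" by (rule mult_index[OF aK K i i])
  also have "\<dots> = (\<Sum>l<d. (cnj (K $$ (i,i)) * K $$ (i,i)) * (if l = i then 1 else 0))"
    using Kd adj_index[OF K i] i by (intro sum.cong refl) auto
  also have "\<dots> = cnj (K $$ (i,i)) * K $$ (i,i)" unfolding sum_delta_mult using i by simp
  finally show ?thesis .
qed

lemma proj_ket: "a < d \<Longrightarrow> b < d \<Longrightarrow> i < d \<Longrightarrow> proj d (ket d i) $$ (a,b) = (if a = i \<and> b = i then 1 else 0)"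
  unfolding proj_def ket_def by simp

lemma proj_carrier: "proj d v \<in> carrier_mat d d" unfolding proj_def by simp

lemma fid_phi:
  assumes p: "psd d \<sigma>"
  shows "fidelity d \<sigma> (proj d (phi_plus d)) = Re (\<Sum>i<d. \<Sum>j<d. \<sigma> $$ (i,j)) / real d"
proof -
  define c where "c = complex_of_real (1 / sqrt (real d))"
  have "bf d \<sigma> (\<lambda>i. phi_plus d $ i) (\<lambda>i. phi_plus d $ i) = bf d \<sigma> (\<lambda>_. c) (\<lambda>_. c)"
    unfolding phi_plus_def c_def by (rule bf_cong) auto
  also have "\<dots> = (cnj c * c) * (\<Sum>i<d. \<Sum>j<d. \<sigma> $$ (i,j))"
    unfolding bf_def by (simp add: sum_distrib_left mult_ac)
  also have "cnj c * c = complex_of_real (1 / real d)"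
  proof -
    have r: "(1 / sqrt (real d))^2 = 1 / real d" by (simp add: power_divide)
    have "cnj c * c = complex_of_real ((1 / sqrt (real d))^2)" by (simp only: c_def complex_cnj_complex_of_real power2_eq_square of_real_mult)
    then show ?thesis unfolding r .
  qed
  finally show ?thesis unfolding fidelity_pure[OF p] by simp
qed

lemma trace_psd_nonneg:
  assumes pt: "psd d \<tau>" and pX: "psd d X"
  shows "0 \<le> Re (\<Sum>i<d. \<Sum>j<d. \<tau> $$ (i,j) * X $$ (i,j))"
proof -
  define B where "B = psd_sqrt d X"
  have pB: "psd d B" and BB: "B * B = X" using psd_sqrt_prop[OF pX] unfolding B_def by auto
  have hB: "hermitian_mat d B" using pB by (rule psd_herm)
  have Bc: "B \<in> carrier_mat d d" using pB by (rule psd_carrier)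
  have Xe: "X $$ (i,j) = (\<Sum>k<d. B $$ (i,k) * cnj (B $$ (j,k)))" if i: "i < d" and j: "j < d" for i j
  proof -
    have "X $$ (i,j) = (\<Sum>k<d. B $$ (i,k) * B $$ (k,j))" unfolding BB[symmetric] by (rule mult_index[OF Bc Bc i j])
    also have "\<dots> = (\<Sum>k<d. B $$ (i,k) * cnj (B $$ (j,k)))" using herm_entry[OF hB _ j] by (intro sum.cong refl) auto
    finally show ?thesis .
  qed
  have "(\<Sum>i<d. \<Sum>j<d. \<tau> $$ (i,j) * X $$ (i,j)) = (\<Sum>i<d. \<Sum>j<d. \<Sum>k<d. cnj (cnj (B $$ (i,k))) * \<tau> $$ (i,j) * cnj (B $$ (j,k)))"
    using Xe by (intro sum.cong refl) (simp add: sum_distrib_left mult_ac)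
  also have "\<dots> = (\<Sum>k<d. \<Sum>i<d. \<Sum>j<d. cnj (cnj (B $$ (i,k))) * \<tau> $$ (i,j) * cnj (B $$ (j,k)))"
    by (subst sum.swap, subst (2) sum.swap, rule refl)
  also have "\<dots> = (\<Sum>k<d. bf d \<tau> (\<lambda>i. cnj (B $$ (i,k))) (\<lambda>i. cnj (B $$ (i,k))))" unfolding bf_def ..
  finally show ?thesis using pt unfolding psd_iff by (simp add: Re_sum sum_nonneg)
qed

lemma psd_gram_exists: assumes pX: "psd d X"
  shows "\<exists>g. \<forall>i<d. \<forall>j<d. X $$ (i,j) = (\<Sum>k<d. g k i * cnj (g k j))"
proof -
  define B where "B = psd_sqrt d X"
  have pB: "psd d B" and BB: "B * B = X" using psd_sqrt_prop[OF pX] unfolding B_def by auto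
  have hB: "hermitian_mat d B" using pB by (rule psd_herm)
  have Bc: "B \<in> carrier_mat d d" using pB by (rule psd_carrier)
  have "X $$ (i,j) = (\<Sum>k<d. B $$ (i,k) * cnj (B $$ (j,k)))" if i: "i < d" and j: "j < d" for i j
  proof -
    have "X $$ (i,j) = (\<Sum>k<d. B $$ (i,k) * B $$ (k,j))" unfolding BB[symmetric] by (rule mult_index[OF Bc Bc i j])
    also have "\<dots> = (\<Sum>k<d. B $$ (i,k) * cnj (B $$ (j,k)))" using herm_entry[OF hB _ j] by (intro sum.cong refl) auto
    finally show ?thesis .
  qed
  then show ?thesis by (intro exI[of _ "\<lambda>k i. B $$ (i,k)"]) auto
qed

lemma schur_corr: assumes p: "psd d \<rho>" and pX: "psd d X"
  shows "psd d (mat d d (\<lambda>(i,j). \<rho> $$ (i,j) * X $$ (i,j)))"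
proof -
  obtain g where g: "\<forall>i<d. \<forall>j<d. X $$ (i,j) = (\<Sum>k<d. g k i * cnj (g k j))" using psd_gram_exists[OF pX] by blast
  have "mat d d (\<lambda>(i,j). \<rho> $$ (i,j) * X $$ (i,j)) = mat d d (\<lambda>(i,j). \<rho> $$ (i,j) * (\<Sum>k<d. g k i * cnj (g k j)))"
    using g by (intro cong_mat) auto
  then show ?thesis using schur_psd[OF p] by simp
qed

lemma adjK_K_gen:
  assumes K: "K \<in> carrier_mat d d" and Kd: "\<And>i j. i < d \<Longrightarrow> j < d \<Longrightarrow> i \<noteq> j \<Longrightarrow> K $$ (i,j) = 0"
    and i: "i < d" and j: "j < d"
  shows "(adj K * K) $$ (i,j) = (if i = j then cnj (K $$ (i,i)) * K $$ (i,i) else 0)"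
proof -
  have aK: "adj K \<in> carrier_mat d d" by (rule adj_carrier[OF K])
  have "(adj K * K) $$ (i,j) = (\<Sum>l<d. adj K $$ (i,l) * K $$ (l,j))" by (rule mult_index[OF aK K i j])
  also have "\<dots> = (\<Sum>l<d. (cnj (K $$ (i,i)) * K $$ (i,j)) * (if l = i then 1 else 0))"
    using Kd adj_index[OF K i] i j by (intro sum.cong refl) auto
  also have "\<dots> = cnj (K $$ (i,i)) * K $$ (i,j)" unfolding sum_delta_mult using i by simp
  also have "\<dots> = (if i = j then cnj (K $$ (i,i)) * K $$ (i,i) else 0)" using Kd i j by auto
  finally show ?thesis .
qed

lemma corr_channel:
  assumes cX: "corr d X"
  shows "\<exists>\<Lambda>. GIO d \<Lambda> \<and> (\<forall>\<sigma>. \<sigma> \<in> carrier_mat d d \<longrightarrow> \<Lambda> \<sigma> = mat d d (\<lambda>(i,j). \<sigma> $$ (i,j) * X $$ (i,j)))"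
proof -
  have pX: "psd d X" and dX: "\<And>i. i < d \<Longrightarrow> X $$ (i,i) = 1" using cX unfolding corr_def by auto
  obtain g where g: "\<forall>i<d. \<forall>j<d. X $$ (i,j) = (\<Sum>k<d. g k i * cnj (g k j))" using psd_gram_exists[OF pX] by blast
  define K where "K k = mat d d (\<lambda>(i,j). if i = j then g k i else 0)" for k
  have Kc: "K k \<in> carrier_mat d d" for k unfolding K_def by simp
  have Kd: "K k $$ (i,j) = 0" if "i < d" "j < d" "i \<noteq> j" for k i j unfolding K_def using that by simp
  have Kii: "K k $$ (i,i) = g k i" if "i < d" for k i unfolding K_def using that by simp
  define \<Lambda> where "\<Lambda> \<sigma> = mat d d (\<lambda>(i,j). \<Sum>k<d. (K k * \<sigma> * adj (K k)) $$ (i,j))" for \<sigma>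
  have form: "\<Lambda> \<sigma> = mat d d (\<lambda>(i,j). \<sigma> $$ (i,j) * X $$ (i,j))" if S: "\<sigma> \<in> carrier_mat d d" for \<sigma>
    unfolding \<Lambda>_def
  proof (rule cong_mat)
    fix i j assume i: "i < d" and j: "j < d"
    have "(\<Sum>k<d. (K k * \<sigma> * adj (K k)) $$ (i,j)) = (\<Sum>k<d. g k i * \<sigma> $$ (i,j) * cnj (g k j))"
      using diag_conj[OF Kc Kd S i j] Kii i j by (intro sum.cong refl) auto
    also have "\<dots> = \<sigma> $$ (i,j) * X $$ (i,j)" using g i j by (simp add: sum_distrib_left mult_ac)
    finally show "(case (i,j) of (i,j) \<Rightarrow> \<Sum>k<d. (K k * \<sigma> * adj (K k)) $$ (i,j)) = (case (i,j) of (i,j) \<Rightarrow> \<sigma> $$ (i,j) * X $$ (i,j))" by simp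
  qed auto
  have qc: "quantum_channel d \<Lambda>" unfolding quantum_channel_def
  proof (intro exI conjI allI impI ballI)
    show "\<And>k. k < d \<Longrightarrow> K k \<in> carrier_mat d d" by (rule Kc)
    show "mat d d (\<lambda>(i,j). \<Sum>k<d. (adj (K k) * K k) $$ (i,j)) = 1\<^sub>m d"
    proof (rule eq_matI)
      fix i j assume "i < dim_row (1\<^sub>m d)" "j < dim_col (1\<^sub>m d)"
      then have i: "i < d" and j: "j < d" by auto
      have "(\<Sum>k<d. (adj (K k) * K k) $$ (i,j)) = (\<Sum>k<d. if i = j then cnj (g k i) * g k i else 0)"
        using adjK_K_gen[OF Kc Kd i j] Kii i by (intro sum.cong refl) auto
      also have "\<dots> = 1\<^sub>m d $$ (i,j)"
      proof (cases "i = j")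
        case True
        then have "(\<Sum>k<d. cnj (g k i) * g k i) = X $$ (i,i)" using g i by (simp add: mult.commute)
        then show ?thesis using True dX[OF i] i by simp
      qed (use i j in simp)
      finally show "mat d d (\<lambda>(i,j). \<Sum>k<d. (adj (K k) * K k) $$ (i,j)) $$ (i,j) = 1\<^sub>m d $$ (i,j)" using i j by simp
    qed auto
    fix \<sigma> :: "complex mat" assume "\<sigma> \<in> carrier_mat d d"
    show "\<Lambda> \<sigma> = mat d d (\<lambda>(i,j). \<Sum>k<d. (K k * \<sigma> * adj (K k)) $$ (i,j))" unfolding \<Lambda>_def ..
  qed
  have "\<Lambda> (proj d (ket d i)) = proj d (ket d i)" if i: "i < d" for i
  proof -
    have "\<Lambda> (proj d (ket d i)) = mat d d (\<lambda>(a,b). proj d (ket d i) $$ (a,b) * X $$ (a,b))"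
      by (rule form[OF proj_carrier])
    also have "\<dots> = proj d (ket d i)"
    proof (rule mat_eq_entries)
      show "mat d d (\<lambda>(a,b). proj d (ket d i) $$ (a,b) * X $$ (a,b)) \<in> carrier_mat d d" by simp
      show "proj d (ket d i) \<in> carrier_mat d d" by (rule proj_carrier)
      fix a b assume "a < d" "b < d"
      then show "mat d d (\<lambda>(a,b). proj d (ket d i) $$ (a,b) * X $$ (a,b)) $$ (a,b) = proj d (ket d i) $$ (a,b)"
        using proj_ket[of a d b i] i dX[OF i] by auto
    qed
    finally show ?thesis .
  qed
  then have "GIO d \<Lambda>" unfolding GIO_def using qc by blast
  then show ?thesis using form by blast
qed

lemma conj_proj:
  assumes K: "K \<in> carrier_mat d d" and b: "b < d" and i: "i < d" and j: "j < d"
  shows "(K * proj d (ket d b) * adj K) $$ (i,j) = K $$ (i,b) * cnj (K $$ (j,b))"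
proof -
  define P where "P = proj d (ket d b)"
  have Pc: "P \<in> carrier_mat d d" unfolding P_def by (rule proj_carrier)
  have KP: "K * P \<in> carrier_mat d d" using K Pc by simp
  have aK: "adj K \<in> carrier_mat d d" by (rule adj_carrier[OF K])
  have kp: "(K * P) $$ (i,l) = K $$ (i,b) * (if l = b then 1 else 0)" if l: "l < d" for l
  proof -
    have "(K * P) $$ (i,l) = (\<Sum>m<d. K $$ (i,m) * P $$ (m,l))" by (rule mult_index[OF K Pc i l])
    also have "\<dots> = (\<Sum>m<d. (K $$ (i,b) * (if l = b then 1 else 0)) * (if m = b then 1 else 0))"
      unfolding P_def using proj_ket[OF _ l b] by (intro sum.cong refl) auto
    also have "\<dots> = K $$ (i,b) * (if l = b then 1 else 0)" unfolding sum_delta_mult using b by simp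
    finally show ?thesis .
  qed
  have "(K * P * adj K) $$ (i,j) = (\<Sum>l<d. (K * P) $$ (i,l) * adj K $$ (l,j))" by (rule mult_index[OF KP aK i j])
  also have "\<dots> = (\<Sum>l<d. (K $$ (i,b) * cnj (K $$ (j,b))) * (if l = b then 1 else 0))"
    using kp adj_index[OF K _ j] by (intro sum.cong refl) auto
  also have "\<dots> = K $$ (i,b) * cnj (K $$ (j,b))" unfolding sum_delta_mult using b by simp
  finally show ?thesis unfolding P_def .
qed

lemma gio_form:
  assumes G: "GIO d \<Lambda>" and S: "\<rho> \<in> carrier_mat d d"
  shows "\<exists>(n::nat) g. (\<forall>i<d. (\<Sum>k<n. g k i * cnj (g k i)) = 1) \<and>
     \<Lambda> \<rho> = mat d d (\<lambda>(i,j). \<rho> $$ (i,j) * (\<Sum>k<n. g k i * cnj (g k j)))"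
proof -
  have qc: "quantum_channel d \<Lambda>" and fx: "\<forall>i<d. \<Lambda> (proj d (ket d i)) = proj d (ket d i)"
    using G unfolding GIO_def by auto
  have ex: "\<exists>(n::nat) K. (\<forall>k<n. K k \<in> carrier_mat d d) \<and>
    mat d d (\<lambda>(i,j). \<Sum>k<n. (adj (K k) * K k) $$ (i,j)) = 1\<^sub>m d \<and>
    (\<forall>\<sigma> \<in> carrier_mat d d. \<Lambda> \<sigma> = mat d d (\<lambda>(i,j). \<Sum>k<n. (K k * \<sigma> * adj (K k)) $$ (i,j)))"
    using qc unfolding quantum_channel_def .
  then obtain n :: nat where "\<exists>K. (\<forall>k<n. K k \<in> carrier_mat d d) \<and>
    mat d d (\<lambda>(i,j). \<Sum>k<n. (adj (K k) * K k) $$ (i,j)) = 1\<^sub>m d \<and>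
    (\<forall>\<sigma> \<in> carrier_mat d d. \<Lambda> \<sigma> = mat d d (\<lambda>(i,j). \<Sum>k<n. (K k * \<sigma> * adj (K k)) $$ (i,j)))" ..
  then obtain K where nk: "(\<forall>k<n. K k \<in> carrier_mat d d) \<and>
    mat d d (\<lambda>(i,j). \<Sum>k<n. (adj (K k) * K k) $$ (i,j)) = 1\<^sub>m d \<and>
    (\<forall>\<sigma> \<in> carrier_mat d d. \<Lambda> \<sigma> = mat d d (\<lambda>(i,j). \<Sum>k<n. (K k * \<sigma> * adj (K k)) $$ (i,j)))" ..
  have Kc: "\<forall>k<n. K k \<in> carrier_mat d d" using nk by (rule conjunct1)
  have idK: "mat d d (\<lambda>(i,j). \<Sum>k<n. (adj (K k) * K k) $$ (i,j)) = 1\<^sub>m d" using nk by (rule conjunct1[OF conjunct2])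
  have form': "\<forall>\<sigma> \<in> carrier_mat d d. \<Lambda> \<sigma> = mat d d (\<lambda>(i,j). \<Sum>k<n. (K k * \<sigma> * adj (K k)) $$ (i,j))"
    using nk by (rule conjunct2[OF conjunct2])
  have form: "\<And>\<sigma>. \<sigma> \<in> carrier_mat d d \<Longrightarrow> \<Lambda> \<sigma> = mat d d (\<lambda>(i,j). \<Sum>k<n. (K k * \<sigma> * adj (K k)) $$ (i,j))"
    using form' by (rule bspec)
  have Kd: "K k $$ (a,b) = 0" if k: "k < n" and a: "a < d" and b: "b < d" and ab: "a \<noteq> b" for k a b
  proof -
    have "\<Lambda> (proj d (ket d b)) $$ (a,a) = (\<Sum>k<n. (K k * proj d (ket d b) * adj (K k)) $$ (a,a))"
      unfolding form[OF proj_carrier] using a by simp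
    also have "\<dots> = (\<Sum>k<n. K k $$ (a,b) * cnj (K k $$ (a,b)))"
      using conj_proj[OF _ b a a] Kc by (intro sum.cong refl) auto
    finally have "(\<Sum>k<n. K k $$ (a,b) * cnj (K k $$ (a,b))) = \<Lambda> (proj d (ket d b)) $$ (a,a)" by simp
    also have "\<dots> = 0" using fx b proj_ket[OF a a b] ab by auto
    finally have "(\<Sum>k<n. K k $$ (a,b) * cnj (K k $$ (a,b))) = 0" .
    then have "complex_of_real (\<Sum>k<n. (cmod (K k $$ (a,b)))^2) = 0"
      by (simp only: of_real_sum complex_norm_square)
    then have "(\<Sum>k<n. (cmod (K k $$ (a,b)))^2) = 0" by (simp only: of_real_eq_0_iff)
    then have "(cmod (K k $$ (a,b)))^2 = 0" using k by (subst (asm) sum_nonneg_eq_0_iff) auto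
    then show ?thesis by simp
  qed
  define g where "g k i = K k $$ (i,i)" for k i
  have gn: "(\<Sum>k<n. g k i * cnj (g k i)) = 1" if i: "i < d" for i
  proof -
    have "(\<Sum>k<n. g k i * cnj (g k i)) = (\<Sum>k<n. (adj (K k) * K k) $$ (i,i))"
      using adjK_K_gen[OF _ Kd i i] Kc unfolding g_def by (intro sum.cong refl) (auto simp: mult.commute)
    also have "\<dots> = mat d d (\<lambda>(i,j). \<Sum>k<n. (adj (K k) * K k) $$ (i,j)) $$ (i,i)" using i by simp
    also have "\<dots> = 1" unfolding idK using i by simp
    finally show ?thesis .
  qed
  have "\<Lambda> \<rho> = mat d d (\<lambda>(i,j). \<Sum>k<n. (K k * \<rho> * adj (K k)) $$ (i,j))" by (rule form[OF S])
  also have "\<dots> = mat d d (\<lambda>(i,j). \<rho> $$ (i,j) * (\<Sum>k<n. g k i * cnj (g k j)))"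
  proof (rule cong_mat)
    fix i j assume i: "i < d" and j: "j < d"
    have "(\<Sum>k<n. (K k * \<rho> * adj (K k)) $$ (i,j)) = (\<Sum>k<n. g k i * \<rho> $$ (i,j) * cnj (g k j))"
      using diag_conj[OF _ Kd S i j] Kc unfolding g_def by (intro sum.cong refl) auto
    also have "\<dots> = \<rho> $$ (i,j) * (\<Sum>k<n. g k i * cnj (g k j))" by (simp add: sum_distrib_left mult_ac)
    finally show "(case (i,j) of (i,j) \<Rightarrow> \<Sum>k<n. (K k * \<rho> * adj (K k)) $$ (i,j)) = (case (i,j) of (i,j) \<Rightarrow> \<rho> $$ (i,j) * (\<Sum>k<n. g k i * cnj (g k j)))" by simp
  qed auto
  finally have L: "\<Lambda> \<rho> = mat d d (\<lambda>(i,j). \<rho> $$ (i,j) * (\<Sum>k<n. g k i * cnj (g k j)))" .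
  show ?thesis apply (rule exI[of _ n]) apply (rule exI[of _ g]) using gn L by blast
qed

lemma diag_bf: "bf d (mat d d (\<lambda>(i,j). if i = j then complex_of_real (e i) else 0)) v v
   = complex_of_real (\<Sum>i<d. e i * (cmod (v i))^2)"
proof -
  have "bf d (mat d d (\<lambda>(i,j). if i = j then complex_of_real (e i) else 0)) v v
     = (\<Sum>i<d. \<Sum>j<d. (cnj (v i) * complex_of_real (e i) * v j) * (if j = i then 1 else 0))"
    unfolding bf_mat by (intro sum.cong refl) auto
  also have "\<dots> = (\<Sum>i<d. complex_of_real (e i) * (cnj (v i) * v i))" unfolding sum_delta_mult by (intro sum.cong refl) auto
  also have "\<dots> = complex_of_real (\<Sum>i<d. e i * (cmod (v i))^2)" unfolding cnj_mult_self by simp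
  finally show ?thesis .
qed

lemma diag_incoherent: assumes "\<forall>i<d. 0 \<le> e i" and "(\<Sum>i<d. e i) = 1"
  shows "incoherent d (mat d d (\<lambda>(i,j). if i = j then complex_of_real (e i) else 0))"
  unfolding incoherent_def density_def
proof (intro conjI allI impI)
  show "psd d (mat d d (\<lambda>(i,j). if i = j then complex_of_real (e i) else 0))" unfolding psd_iff
  proof (intro conjI allI)
    show "hermitian_mat d (mat d d (\<lambda>(i,j). if i = j then complex_of_real (e i) else 0))" unfolding herm_iff by auto
    fix v show "0 \<le> Re (bf d (mat d d (\<lambda>(i,j). if i = j then complex_of_real (e i) else 0)) v v)"
      unfolding diag_bf using assms(1) by (auto intro!: sum_nonneg)
  qed
  show "mtrace (mat d d (\<lambda>(i,j). if i = j then complex_of_real (e i) else 0)) = 1"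
    unfolding mtrace_def using assms(2) by (simp flip: of_real_sum)
  fix i j assume "i < d" "j < d" "i \<noteq> j"
  then show "mat d d (\<lambda>(i,j). if i = j then complex_of_real (e i) else 0) $$ (i,j) = 0" by simp
qed

lemma rob_eq:
  assumes dens: "density d \<rho>" and cX: "corr d X" and mx: "\<forall>Y. corr d Y \<longrightarrow> obj d \<rho> Y \<le> obj d \<rho> X"
  shows "robustness d \<rho> = obj d \<rho> X - 1"
proof -
  have p\<rho>: "psd d \<rho>" and tr\<rho>: "mtrace \<rho> = 1" using dens unfolding density_def by auto
  have h\<rho>: "hermitian_mat d \<rho>" using p\<rho> by (rule psd_herm)
  have \<rho>c: "\<rho> \<in> carrier_mat d d" using p\<rho> by (rule psd_carrier)
  have pX: "psd d X" and dX: "\<And>i. i < d \<Longrightarrow> X $$ (i,i) = 1" using cX unfolding corr_def by auto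
  define V where "V = obj d \<rho> X"
  define c where "c i = Re (\<Sum>j<d. \<rho> $$ (i,j) * X $$ (i,j))" for i
  have SO: "Re (bf d \<rho> u u) \<le> (\<Sum>i<d. c i * (cmod (u i))^2)" for u
    using second_order[OF h\<rho> cX mx, of u] unfolding c_def .
  have sumc: "(\<Sum>i<d. c i) = V" unfolding V_def obj_def c_def by (simp add: Re_sum)
  have trs: "(\<Sum>i<d. \<rho> $$ (i,i)) = 1" using tr\<rho> \<rho>c unfolding mtrace_def by simp
  have retr: "(\<Sum>i<d. Re (\<rho> $$ (i,i))) = 1" using arg_cong[OF trs, of Re] by (simp add: Re_sum)
  have V1: "1 \<le> V"
  proof -
    have "obj d \<rho> (mat d d (\<lambda>(i,j). if i = j then 1 else 0)) \<le> V" using mx corr_one unfolding V_def by blast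
    moreover have "obj d \<rho> (mat d d (\<lambda>(i,j). if i = j then 1 else 0)) = Re (\<Sum>i<d. \<rho> $$ (i,i))"
    proof -
      have "(\<Sum>i<d. \<Sum>j<d. \<rho> $$ (i,j) * (case (i,j) of (i,j) \<Rightarrow> if i = j then 1 else 0)) = (\<Sum>i<d. \<Sum>j<d. \<rho> $$ (i,j) * (if j = i then 1 else 0))"
        by (intro sum.cong refl) auto
      also have "\<dots> = (\<Sum>i<d. \<rho> $$ (i,i))" unfolding sum_delta_mult by simp
      finally show ?thesis unfolding obj_mat by simp
    qed
    ultimately show ?thesis using retr by (simp add: Re_sum)
  qed
  have cge: "Re (\<rho> $$ (i,i)) \<le> c i" if i: "i < d" for i
  proof -
    have "Re (bf d \<rho> (ev i) (ev i)) \<le> (\<Sum>l<d. c l * (cmod (ev i l))^2)" by (rule SO)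
    also have "(\<Sum>l<d. c l * (cmod (ev i l))^2) = (\<Sum>l<d. c l * (if l = i then 1 else 0))"
      unfolding ev_def by (intro sum.cong refl) auto
    also have "\<dots> = c i" unfolding sum_delta_mult using i by simp
    finally show ?thesis using bf_unit[OF i i] by simp
  qed
  have c0: "0 \<le> c i" if i: "i < d" for i using cge[OF i] psd_diag(1)[OF p\<rho> i] by linarith
  define Df where "Df i j = (if i = j then complex_of_real (c i) else 0)" for i j
  have bfD: "(\<Sum>i<d. \<Sum>j<d. cnj (v i) * Df i j * v j) = complex_of_real (\<Sum>i<d. c i * (cmod (v i))^2)" for v
    using diag_bf[of d c v] unfolding bf_mat Df_def by simp
  define FS where "FS = {s::real. 0 \<le> s \<and>
     (\<exists>\<tau>. density d \<tau> \<and> incoherent d ((1 / (1 + complex_of_real s)) \<cdot>\<^sub>m (\<rho> + complex_of_real s \<cdot>\<^sub>m \<tau>)))}"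
  have low: "V - 1 \<le> s" if sFS: "s \<in> FS" for s
  proof -
    obtain \<tau> where s0: "0 \<le> s" and d\<tau>: "density d \<tau>"
      and inc: "incoherent d ((1 / (1 + complex_of_real s)) \<cdot>\<^sub>m (\<rho> + complex_of_real s \<cdot>\<^sub>m \<tau>))"
      using sFS unfolding FS_def by blast
    define cs where "cs = complex_of_real s"
    define \<delta> where "\<delta> = (1 / (1 + cs)) \<cdot>\<^sub>m (\<rho> + cs \<cdot>\<^sub>m \<tau>)"
    have p\<tau>: "psd d \<tau>" using d\<tau> unfolding density_def by auto
    have \<tau>c: "\<tau> \<in> carrier_mat d d" using p\<tau> by (rule psd_carrier)
    have "1 + cs = complex_of_real (1 + s)" unfolding cs_def by simp
    then have cs1: "1 + cs \<noteq> 0" using s0 by (simp only: of_real_eq_0_iff)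
    have \<delta>c: "dim_row \<delta> = d" unfolding \<delta>_def using \<tau>c by simp
    have \<delta>e: "\<delta> $$ (i,j) = (1 / (1 + cs)) * (\<rho> $$ (i,j) + cs * \<tau> $$ (i,j))" if "i < d" "j < d" for i j
      unfolding \<delta>_def using that \<tau>c \<rho>c by simp
    have \<rho>e: "\<rho> $$ (i,j) = (1 + cs) * \<delta> $$ (i,j) - cs * \<tau> $$ (i,j)" if "i < d" "j < d" for i j
      using \<delta>e[OF that] cs1 by (simp add: field_simps)
    have incd: "density d \<delta>" and off: "\<And>i j. i < d \<Longrightarrow> j < d \<Longrightarrow> i \<noteq> j \<Longrightarrow> \<delta> $$ (i,j) = 0"
      using inc unfolding incoherent_def \<delta>_def cs_def by auto
    have tr\<delta>: "(\<Sum>i<d. \<delta> $$ (i,i)) = 1" using incd \<delta>c unfolding density_def mtrace_def by simp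
    have s\<delta>: "(\<Sum>i<d. \<Sum>j<d. \<delta> $$ (i,j) * X $$ (i,j)) = 1"
    proof -
      have "(\<Sum>i<d. \<Sum>j<d. \<delta> $$ (i,j) * X $$ (i,j)) = (\<Sum>i<d. \<Sum>j<d. \<delta> $$ (i,i) * (if j = i then 1 else 0))"
        using off dX by (intro sum.cong refl) auto
      also have "\<dots> = (\<Sum>i<d. \<delta> $$ (i,i))" unfolding sum_delta_mult by simp
      finally show ?thesis using tr\<delta> by simp
    qed
    have "(\<Sum>i<d. \<Sum>j<d. \<rho> $$ (i,j) * X $$ (i,j))
        = (\<Sum>i<d. \<Sum>j<d. (1 + cs) * (\<delta> $$ (i,j) * X $$ (i,j)) - cs * (\<tau> $$ (i,j) * X $$ (i,j)))"
    proof (intro sum.cong refl)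
      fix i j assume "i \<in> {..<d}" "j \<in> {..<d}"
      then have e: "\<rho> $$ (i,j) = (1 + cs) * \<delta> $$ (i,j) - cs * \<tau> $$ (i,j)" using \<rho>e by simp
      show "\<rho> $$ (i,j) * X $$ (i,j) = (1 + cs) * (\<delta> $$ (i,j) * X $$ (i,j)) - cs * (\<tau> $$ (i,j) * X $$ (i,j))"
        by (subst e) (simp add: algebra_simps)
    qed
    also have "\<dots> = (1 + cs) * (\<Sum>i<d. \<Sum>j<d. \<delta> $$ (i,j) * X $$ (i,j)) - cs * (\<Sum>i<d. \<Sum>j<d. \<tau> $$ (i,j) * X $$ (i,j))"
      by (simp add: sum_subtractf sum_distrib_left)
    also have "\<dots> = 1 + cs - cs * (\<Sum>i<d. \<Sum>j<d. \<tau> $$ (i,j) * X $$ (i,j))" unfolding s\<delta> by simp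
    finally have "V = 1 + s - s * Re (\<Sum>i<d. \<Sum>j<d. \<tau> $$ (i,j) * X $$ (i,j))"
      unfolding V_def obj_def cs_def by simp
    moreover have "0 \<le> s * Re (\<Sum>i<d. \<Sum>j<d. \<tau> $$ (i,j) * X $$ (i,j))"
      using trace_psd_nonneg[OF p\<tau> pX] s0 by simp
    ultimately show ?thesis by linarith
  qed
  have mem: "V - 1 \<in> FS"
  proof (cases "V = 1")
    case True
    have ceq: "c i = Re (\<rho> $$ (i,i))" if i: "i < d" for i
    proof -
      have "(\<Sum>i<d. c i - Re (\<rho> $$ (i,i))) = 0" using sumc retr True by (simp add: sum_subtractf)
      moreover have "\<forall>i\<in>{..<d}. 0 \<le> c i - Re (\<rho> $$ (i,i))" using cge by auto
      ultimately have "\<forall>i\<in>{..<d}. c i - Re (\<rho> $$ (i,i)) = 0"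
        using sum_nonneg_eq_0_iff[of "{..<d}" "\<lambda>i. c i - Re (\<rho> $$ (i,i))"] by simp
      then show ?thesis using i by auto
    qed
    define M where "M = mat d d (\<lambda>(i,j). Df i j - \<rho> $$ (i,j))"
    have pM: "psd d M" unfolding psd_iff
    proof (intro conjI allI)
      show "hermitian_mat d M" unfolding herm_iff M_def Df_def
      proof (intro conjI allI impI)
        fix i j assume "i < d" "j < d"
        then show "mat d d (\<lambda>(i,j). (if i = j then complex_of_real (c i) else 0) - \<rho> $$ (i,j)) $$ (i,j) =
          cnj (mat d d (\<lambda>(i,j). (if i = j then complex_of_real (c i) else 0) - \<rho> $$ (i,j)) $$ (j,i))"
          using herm_entry[OF h\<rho>, of i j] by auto
      qed simp
      fix v
      have "bf d M v v = (\<Sum>i<d. \<Sum>j<d. cnj (v i) * Df i j * v j) - bf d \<rho> v v"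
        unfolding M_def bf_mat bf_def by (simp add: algebra_simps sum_subtractf)
      then show "0 \<le> Re (bf d M v v)" using SO[of v] unfolding bfD by simp
    qed
    have offz: "\<rho> $$ (i,j) = 0" if "i < d" "j < d" "i \<noteq> j" for i j
    proof -
      have "Re (M $$ (i,i)) = 0" unfolding M_def Df_def using that ceq by simp
      from psd_offdiag_zero[OF pM that(1,2) this] show ?thesis unfolding M_def Df_def using that by simp
    qed
    have eq: "(1 / (1 + complex_of_real (V - 1))) \<cdot>\<^sub>m (\<rho> + complex_of_real (V - 1) \<cdot>\<^sub>m \<rho>) = \<rho>"
      using True \<rho>c by (intro mat_eq_entries) auto
    have inc: "incoherent d \<rho>" unfolding incoherent_def using dens offz by blast
    have "0 \<le> V - 1 \<and> density d \<rho> \<and> incoherent d ((1 / (1 + complex_of_real (V - 1))) \<cdot>\<^sub>m (\<rho> + complex_of_real (V - 1) \<cdot>\<^sub>m \<rho>))"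
      using True dens inc unfolding eq by simp
    then show ?thesis unfolding FS_def by blast
  next
    case False
    then have Vg: "V > 1" using V1 by simp
    define s0 where "s0 = V - 1"
    have s0p: "s0 > 0" unfolding s0_def using Vg by simp
    define \<tau> where "\<tau> = mat d d (\<lambda>(i,j). complex_of_real (1 / s0) * (Df i j - \<rho> $$ (i,j)))"
    have \<tau>c: "\<tau> \<in> carrier_mat d d" unfolding \<tau>_def by simp
    have p\<tau>: "psd d \<tau>" unfolding psd_iff
    proof (intro conjI allI)
      show "hermitian_mat d \<tau>" unfolding herm_iff \<tau>_def Df_def
      proof (intro conjI allI impI)
        fix i j assume "i < d" "j < d"
        then show "mat d d (\<lambda>(i,j). complex_of_real (1 / s0) * ((if i = j then complex_of_real (c i) else 0) - \<rho> $$ (i,j))) $$ (i,j) =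
          cnj (mat d d (\<lambda>(i,j). complex_of_real (1 / s0) * ((if i = j then complex_of_real (c i) else 0) - \<rho> $$ (i,j))) $$ (j,i))"
          using herm_entry[OF h\<rho>, of i j] by auto
      qed simp
      fix v
      have "bf d \<tau> v v = complex_of_real (1 / s0) * ((\<Sum>i<d. \<Sum>j<d. cnj (v i) * Df i j * v j) - bf d \<rho> v v)"
        unfolding \<tau>_def bf_mat bf_def by (simp add: algebra_simps sum_subtractf sum_distrib_left)
      then have "Re (bf d \<tau> v v) = (1 / s0) * ((\<Sum>i<d. c i * (cmod (v i))^2) - Re (bf d \<rho> v v))"
        unfolding bfD by simp
      then show "0 \<le> Re (bf d \<tau> v v)" using SO[of v] s0p by simp
    qed
    have tr\<tau>: "mtrace \<tau> = 1"
    proof -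
      have "mtrace \<tau> = (\<Sum>i<d. complex_of_real (1 / s0) * (complex_of_real (c i) - \<rho> $$ (i,i)))"
        unfolding mtrace_def \<tau>_def Df_def by simp
      also have "\<dots> = complex_of_real (1 / s0) * (complex_of_real (\<Sum>i<d. c i) - (\<Sum>i<d. \<rho> $$ (i,i)))"
        by (simp only: sum_distrib_left[symmetric] sum_subtractf of_real_sum)
      also have "\<dots> = complex_of_real (1 / s0) * complex_of_real s0" unfolding sumc trs s0_def by simp
      also have "\<dots> = 1" using s0p by (simp flip: of_real_mult)
      finally show ?thesis .
    qed
    have eq: "(1 / (1 + complex_of_real s0)) \<cdot>\<^sub>m (\<rho> + complex_of_real s0 \<cdot>\<^sub>m \<tau>)
       = mat d d (\<lambda>(i,j). if i = j then complex_of_real (c i / V) else 0)"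
    proof (rule mat_eq_entries)
      show "(1 / (1 + complex_of_real s0)) \<cdot>\<^sub>m (\<rho> + complex_of_real s0 \<cdot>\<^sub>m \<tau>) \<in> carrier_mat d d" using \<tau>c \<rho>c by auto
      show "mat d d (\<lambda>(i,j). if i = j then complex_of_real (c i / V) else 0) \<in> carrier_mat d d" by simp
      fix i j assume i: "i < d" and j: "j < d"
      have V0: "complex_of_real V \<noteq> 0" using Vg by simp
      have "((1 / (1 + complex_of_real s0)) \<cdot>\<^sub>m (\<rho> + complex_of_real s0 \<cdot>\<^sub>m \<tau>)) $$ (i,j)
          = (1 / complex_of_real V) * (\<rho> $$ (i,j) + complex_of_real s0 * (complex_of_real (1 / s0) * (Df i j - \<rho> $$ (i,j))))"
        using i j \<tau>c \<rho>c unfolding \<tau>_def s0_def by simp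
      also have "\<dots> = Df i j / complex_of_real V" using s0p V0 by (simp add: field_simps flip: of_real_mult)
      also have "\<dots> = mat d d (\<lambda>(i,j). if i = j then complex_of_real (c i / V) else 0) $$ (i,j)"
        unfolding Df_def using i j by simp
      finally show "((1 / (1 + complex_of_real s0)) \<cdot>\<^sub>m (\<rho> + complex_of_real s0 \<cdot>\<^sub>m \<tau>)) $$ (i,j) =
        mat d d (\<lambda>(i,j). if i = j then complex_of_real (c i / V) else 0) $$ (i,j)" .
    qed
    have "incoherent d (mat d d (\<lambda>(i,j). if i = j then complex_of_real (c i / V) else 0))"
    proof (rule diag_incoherent)
      show "\<forall>i<d. 0 \<le> c i / V" using c0 Vg by simp
      show "(\<Sum>i<d. c i / V) = 1" using sumc Vg by (simp add: sum_divide_distrib[symmetric])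
    qed
    moreover have "density d \<tau>" unfolding density_def using p\<tau> tr\<tau> by simp
    ultimately have "0 \<le> s0 \<and> density d \<tau> \<and> incoherent d ((1 / (1 + complex_of_real s0)) \<cdot>\<^sub>m (\<rho> + complex_of_real s0 \<cdot>\<^sub>m \<tau>))"
      using s0p unfolding eq by simp
    then show ?thesis unfolding FS_def s0_def[symmetric] by blast
  qed
  have "Inf FS = V - 1" by (rule cInf_eq_minimum[OF mem low])
  then show ?thesis unfolding robustness_def FS_def V_def .
qed

theorem theorem2:
  fixes d :: nat and \<rho> :: "complex mat"
  assumes "density d \<rho>"
  shows "(\<exists>\<Lambda>. GIO d \<Lambda> \<and>
            fidelity d (\<Lambda> \<rho>) (proj d (phi_plus d)) = robustness_bar d \<rho>) \<and>
         (\<forall>\<Lambda>. GIO d \<Lambda> \<longrightarrow>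
            fidelity d (\<Lambda> \<rho>) (proj d (phi_plus d)) \<le> robustness_bar d \<rho>)"
proof -
  have p\<rho>: "psd d \<rho>" using assms unfolding density_def by auto
  have \<rho>c: "\<rho> \<in> carrier_mat d d" using p\<rho> by (rule psd_carrier)
  obtain X where cX: "corr d X" and mx: "\<forall>Y. corr d Y \<longrightarrow> obj d \<rho> Y \<le> obj d \<rho> X"
    using corr_max by blast
  have pX: "psd d X" using cX unfolding corr_def by auto
  have rb: "robustness_bar d \<rho> = obj d \<rho> X / real d"
    unfolding robustness_bar_def rob_eq[OF assms cX mx] by simp
  have fidY: "fidelity d (mat d d (\<lambda>(i,j). \<rho> $$ (i,j) * Y $$ (i,j))) (proj d (phi_plus d)) = obj d \<rho> Y / real d"
    if pY: "psd d Y" for Y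
  proof -
    have ps: "psd d (mat d d (\<lambda>(i,j). \<rho> $$ (i,j) * Y $$ (i,j)))" by (rule schur_corr[OF p\<rho> pY])
    have "(\<Sum>i<d. \<Sum>j<d. mat d d (\<lambda>(i,j). \<rho> $$ (i,j) * Y $$ (i,j)) $$ (i,j)) = (\<Sum>i<d. \<Sum>j<d. \<rho> $$ (i,j) * Y $$ (i,j))"
      by (intro sum.cong refl) auto
    then show ?thesis unfolding fid_phi[OF ps] obj_def by simp
  qed
  have ex: "\<exists>\<Lambda>. GIO d \<Lambda> \<and> fidelity d (\<Lambda> \<rho>) (proj d (phi_plus d)) = robustness_bar d \<rho>"
  proof -
    obtain \<Lambda> where G: "GIO d \<Lambda>" and f: "\<forall>\<sigma>. \<sigma> \<in> carrier_mat d d \<longrightarrow> \<Lambda> \<sigma> = mat d d (\<lambda>(i,j). \<sigma> $$ (i,j) * X $$ (i,j))"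
      using corr_channel[OF cX] by blast
    have "\<Lambda> \<rho> = mat d d (\<lambda>(i,j). \<rho> $$ (i,j) * X $$ (i,j))" using f \<rho>c by blast
    then have "fidelity d (\<Lambda> \<rho>) (proj d (phi_plus d)) = robustness_bar d \<rho>" unfolding rb using fidY[OF pX] by simp
    then show ?thesis using G by blast
  qed
  have up: "fidelity d (\<Lambda> \<rho>) (proj d (phi_plus d)) \<le> robustness_bar d \<rho>" if G: "GIO d \<Lambda>" for \<Lambda>
  proof -
    obtain n :: nat and g where gn: "\<forall>i<d. (\<Sum>k<n. g k i * cnj (g k i)) = 1"
      and L: "\<Lambda> \<rho> = mat d d (\<lambda>(i,j). \<rho> $$ (i,j) * (\<Sum>k<n. g k i * cnj (g k j)))"
      using gio_form[OF G \<rho>c] by blast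
    define Y where "Y = mat d d (\<lambda>(i,j). \<Sum>k<n. g k i * cnj (g k j))"
    have pY: "psd d Y" unfolding Y_def by (rule gram_psd)
    have cY: "corr d Y" unfolding corr_def using pY gn unfolding Y_def by simp
    have "\<Lambda> \<rho> = mat d d (\<lambda>(i,j). \<rho> $$ (i,j) * Y $$ (i,j))" unfolding L Y_def by (intro cong_mat) auto
    then have "fidelity d (\<Lambda> \<rho>) (proj d (phi_plus d)) = obj d \<rho> Y / real d" using fidY[OF pY] by simp
    also have "\<dots> \<le> obj d \<rho> X / real d" using mx cY by (simp add: divide_right_mono)
    finally show ?thesis unfolding rb .
  qed
  show ?thesis using ex up by blast
qed


end
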